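(* Let $n\ge3$, $K\ge1$, and $\underline a=(a_1,\dots,a_K)\in(\mathbb{C}^\times)^K$ with $a_k\neq a_j^{\pm1}$ for all $k\neq j$. If $a_1=-1$ and $a_k\neq1$ for every $k\ge2$, then the image of $\psi_{\underline a}$ is isomorphic to the direct sum of one copy of $so_{2n}$ and $K-1$ copies of $sl_{2n}$.
   Context: For $n\geq 3$, $M_n=(m_{i,j})$ is the $n\times n$ integer matrix with $m_{i,i}=2$, $m_{i,i+1}=m_{i+1,i}=-1$ ($1\le i\le n-1$), $m_{1,n}=m_{n,1}=1$, all other entries $0$. $\mathrm{gim}(M_n)$ is the complex Lie algebra generated by $e_i,f_i,h_i$ ($1\le i\le n$) with relations: (R1) $[h_i,e_j]=m_{i,j}e_j$, $[h_i,f_j]=-m_{i,j}f_j$, $[e_i,f_i]=h_i$ for all $i,j$; (R2) for $i\ne j$ with $m_{i,j}\le0$: $[e_i,f_j]=0=[f_i,e_j]$, $(\mathrm{ad}\,e_i)^{1-m_{i,j}}e_j=0=(\mathrm{ad}\,f_i)^{1-m_{i,j}}f_j$; (R3) for $i\ne j$ with $m_{i,j}>0$: $[e_i,e_j]=0=[f_i,f_j]$, $(\mathrm{ad}\,e_i)^{m_{i,j}+1}f_j=0=(\mathrm{ad}\,f_i)^{m_{i,j}+1}e_j$. For $a\in\mathbb{C}^\times$, $\psi_a:\mathrm{gim}(M_n)\to sl_{2n}$ is the Lie algebra homomorphism determined by $\psi_a(e_i)=E_{i,i+1}-E_{n+i+1,n+i}$, $\psi_a(f_i)=E_{i+1,i}-E_{n+i,n+i+1}$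 ($1\le i\le n-1$), $\psi_a(e_n)=E_{n,n+1}+a^{-1}E_{1,2n}$, $\psi_a(f_n)=E_{n+1,n}+aE_{2n,1}$, where $E_{i,j}$ are matrix units. For $\underline a=(a_1,\dots,a_K)$, $\psi_{\underline a}=\bigoplus_{k=1}^K\psi_{a_k}:\mathrm{gim}(M_n)\to sl_{2n}^{\oplus K}$, $x\mapsto(\psi_{a_1}(x),\dots,\psi_{a_K}(x))$. *)

theory Defs
  imports Complex_Main
begin

text \<open>Elements of sl_{2n}^{\<oplus>K} (and of subalgebras of gl_{2n}^K) are represented as
  functions x k r s = (r,s)-entry of the k-th component, with 1-based indices
  k \<in> {1..K}, r,s \<in> {1..2n}, and value 0 outside these ranges.\<close>

type_synonym tup = "nat \<Rightarrow> nat \<Rightarrow> nat \<Rightarrow> complex"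

definition matE :: "nat \<Rightarrow> nat \<Rightarrow> nat \<Rightarrow> nat \<Rightarrow> complex" where
  "matE p q = (\<lambda>r s. if r = p \<and> s = q then 1 else 0)"

definition psi_e :: "nat \<Rightarrow> complex \<Rightarrow> nat \<Rightarrow> nat \<Rightarrow> nat \<Rightarrow> complex" where
  "psi_e n a i = (if i < n
     then (\<lambda>r s. matE i (i+1) r s - matE (n+i+1) (n+i) r s)
     else (\<lambda>r s. matE n (n+1) r s + inverse a * matE 1 (2*n) r s))"

definition psi_f :: "nat \<Rightarrow> complex \<Rightarrow> nat \<Rightarrow> nat \<Rightarrow> nat \<Rightarrow> complex" where
  "psi_f n a i = (if i < n
     then (\<lambda>r s. matE (i+1) i r s - matE (n+i) (n+i+1) r s)
     else (\<lambda>r s. matE (n+1) n r s + a * matE (2*n) 1 r s))"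

definition tup_of :: "nat \<Rightarrow> (nat \<Rightarrow> nat \<Rightarrow> nat \<Rightarrow> complex) \<Rightarrow> tup" where
  "tup_of K g = (\<lambda>k r s. if k \<in> {1..K} then g k r s else 0)"

definition lie_br :: "nat \<Rightarrow> tup \<Rightarrow> tup \<Rightarrow> tup" where
  "lie_br N x y = (\<lambda>k r s. (\<Sum>l\<in>{1..N}. x k r l * y k l s - y k r l * x k l s))"

definition tadd :: "tup \<Rightarrow> tup \<Rightarrow> tup" where
  "tadd x y = (\<lambda>k r s. x k r s + y k r s)"

definition tsmul :: "complex \<Rightarrow> tup \<Rightarrow> tup" where
  "tsmul c x = (\<lambda>k r s. c * x k r s)"

inductive_set lie_gen :: "nat \<Rightarrow> tup set \<Rightarrow> tup set" for N S where
  gen: "x \<in> S \<Longrightarrow> x \<in> lie_gen N S"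
| zero: "(\<lambda>k r s. 0) \<in> lie_gen N S"
| add: "x \<in> lie_gen N S \<Longrightarrow> y \<in> lie_gen N S \<Longrightarrow> tadd x y \<in> lie_gen N S"
| smul: "x \<in> lie_gen N S \<Longrightarrow> tsmul c x \<in> lie_gen N S"
| br: "x \<in> lie_gen N S \<Longrightarrow> y \<in> lie_gen N S \<Longrightarrow> lie_br N x y \<in> lie_gen N S"

definition psiA_e :: "nat \<Rightarrow> nat \<Rightarrow> (nat \<Rightarrow> complex) \<Rightarrow> nat \<Rightarrow> tup" where
  "psiA_e n K a i = tup_of K (\<lambda>k. psi_e n (a k) i)"

definition psiA_f :: "nat \<Rightarrow> nat \<Rightarrow> (nat \<Rightarrow> complex) \<Rightarrow> nat \<Rightarrow> tup" where
  "psiA_f n K a i = tup_of K (\<lambda>k. psi_f n (a k) i)"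

text \<open>Image of psi_a: since gim(M_n) is generated by e_i, f_i, h_i and psi_a is a
  Lie algebra homomorphism, its image is the Lie subalgebra generated by the images
  of the generators (with psi_a(h_i) = [psi_a(e_i), psi_a(f_i)]).\<close>
definition psi_image :: "nat \<Rightarrow> nat \<Rightarrow> (nat \<Rightarrow> complex) \<Rightarrow> tup set" where
  "psi_image n K a = lie_gen (2*n)
     ((psiA_e n K a ` {1..n}) \<union> (psiA_f n K a ` {1..n})
      \<union> ((\<lambda>i. lie_br (2*n) (psiA_e n K a i) (psiA_f n K a i)) ` {1..n}))"

definition so_sl_sum :: "nat \<Rightarrow> nat \<Rightarrow> tup set" where
  "so_sl_sum n K = {x.
     (\<forall>k r s. x k r s \<noteq> 0 \<longrightarrow> k \<in> {1..K} \<and> r \<in> {1..2*n} \<and> s \<in> {1..2*n})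
     \<and> (\<forall>r s. x 1 s r = - x 1 r s)
     \<and> (\<forall>k\<in>{2..K}. (\<Sum>r\<in>{1..2*n}. x k r r) = 0)}"

definition lie_iso :: "nat \<Rightarrow> tup set \<Rightarrow> tup set \<Rightarrow> bool" where
  "lie_iso N A B = (\<exists>\<phi>. bij_betw \<phi> A B \<and>
     (\<forall>x\<in>A. \<forall>y\<in>A. \<phi> (tadd x y) = tadd (\<phi> x) (\<phi> y)
        \<and> \<phi> (lie_br N x y) = lie_br N (\<phi> x) (\<phi> y))
     \<and> (\<forall>x\<in>A. \<forall>c. \<phi> (tsmul c x) = tsmul c (\<phi> x)))"

end

theory Submission
  imports Defs "HOL-Library.Function_Algebras"
begin


type_synonym mat = "nat \<Rightarrow> nat \<Rightarrow> complex"

definition mbr :: "nat \<Rightarrow> mat \<Rightarrow> mat \<Rightarrow> mat" where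
  "mbr N X Y = (\<lambda>r s. \<Sum>l\<in>{1..N}. X r l * Y l s - Y r l * X l s)"

definition msc :: "complex \<Rightarrow> mat \<Rightarrow> mat" where
  "msc c X = (\<lambda>r s. c * X r s)"

lemma lie_br_mbr: "lie_br N x y = (\<lambda>k. mbr N (x k) (y k))"
  by (simp add: lie_br_def mbr_def)

lemma mbr_add1: "mbr N (X + Y) Z = mbr N X Z + mbr N Y Z"
  by (rule ext)+ (simp add: mbr_def sum.distrib[symmetric] algebra_simps)
lemma mbr_add2: "mbr N Z (X + Y) = mbr N Z X + mbr N Z Y"
  by (rule ext)+ (simp add: mbr_def sum.distrib[symmetric] algebra_simps)
lemma mbr_diff1: "mbr N (X - Y) Z = mbr N X Z - mbr N Y Z"
  by (rule ext)+ (simp add: mbr_def sum_subtractf[symmetric] algebra_simps)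
lemma mbr_diff2: "mbr N Z (X - Y) = mbr N Z X - mbr N Z Y"
  by (rule ext)+ (simp add: mbr_def sum_subtractf[symmetric] algebra_simps)
lemma mbr_msc1: "mbr N (msc c X) Z = msc c (mbr N X Z)"
  by (rule ext)+ (simp add: mbr_def msc_def sum_distrib_left algebra_simps)
lemma mbr_msc2: "mbr N Z (msc c X) = msc c (mbr N Z X)"
  by (rule ext)+ (simp add: mbr_def msc_def sum_distrib_left algebra_simps)
lemma mbr_zero1: "mbr N 0 Z = 0" by (rule ext)+ (simp add: mbr_def)
lemma mbr_zero2: "mbr N Z 0 = 0" by (rule ext)+ (simp add: mbr_def)
lemma mbr_anti: "mbr N X Y = - mbr N Y X"
  by (rule ext)+ (simp add: mbr_def sum_negf[symmetric])

lemma sum_matE_prod: "(\<Sum>l\<in>{1..N}. matE p q r l * matE u v l s) = (if q = u \<and> 1 \<le> u \<and> u \<le> N then matE p v r s else 0)"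
proof -
  have "(\<Sum>l\<in>{1..N}. matE p q r l * matE u v l s) = (\<Sum>l\<in>{1..N}. if l = q then (if r=p \<and> q=u \<and> s=v then 1 else 0) else 0)"
    by (rule sum.cong) (auto simp: matE_def)
  also have "\<dots> = (if q = u \<and> 1 \<le> u \<and> u \<le> N then matE p v r s else 0)"
    by (auto simp: matE_def)
  finally show ?thesis .
qed

lemma mbr_matE: "mbr N (matE p q) (matE u v) =
   (if q = u \<and> 1 \<le> u \<and> u \<le> N then matE p v else 0) - (if v = p \<and> 1 \<le> p \<and> p \<le> N then matE u q else 0)"
  unfolding mbr_def sum_subtractf sum_matE_prod by (rule ext)+ simp

lemmas mbr_simps = mbr_add1 mbr_add2 mbr_diff1 mbr_diff2 mbr_msc1 mbr_msc2 mbr_zero1 mbr_zero2 mbr_matE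


lemma tadd_plus: "tadd x y = x + y"
  by (rule ext)+ (simp add: tadd_def)

lemma msc_add: "msc c (X + Y) = msc c X + msc c Y" by (rule ext)+ (simp add: msc_def algebra_simps)
lemma msc_diff: "msc c (X - Y) = msc c X - msc c Y" by (rule ext)+ (simp add: msc_def algebra_simps)
lemma msc_msc: "msc c (msc d X) = msc (c*d) X" by (rule ext)+ (simp add: msc_def)
lemma msc_1: "msc 1 X = X" by (rule ext)+ (simp add: msc_def)
lemma msc_m1: "msc (-1) X = - X" by (rule ext)+ (simp add: msc_def)
lemma msc_addc: "msc c X + msc d X = msc (c+d) X" by (rule ext)+ (simp add: msc_def algebra_simps)
lemma msc_diffc: "msc c X - msc d X = msc (c-d) X" by (rule ext)+ (simp add: msc_def algebra_simps)

definition msub :: "nat \<Rightarrow> mat set \<Rightarrow> bool" where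
  "msub N M \<longleftrightarrow> 0 \<in> M \<and> (\<forall>X\<in>M. \<forall>Y\<in>M. X + Y \<in> M) \<and> (\<forall>X\<in>M. \<forall>c. msc c X \<in> M)
     \<and> (\<forall>X\<in>M. \<forall>Y\<in>M. mbr N X Y \<in> M)"

lemma msubD:
  assumes "msub N M"
  shows "0 \<in> M" "X \<in> M \<Longrightarrow> Y \<in> M \<Longrightarrow> X + Y \<in> M" "X \<in> M \<Longrightarrow> msc c X \<in> M"
    "X \<in> M \<Longrightarrow> Y \<in> M \<Longrightarrow> mbr N X Y \<in> M"
  using assms unfolding msub_def by auto

lemma msub_minus: "msub N M \<Longrightarrow> X \<in> M \<Longrightarrow> - X \<in> M"
  using msubD(3)[of N M X "-1"] by (simp add: msc_m1)

lemma msub_diff: "msub N M \<Longrightarrow> X \<in> M \<Longrightarrow> Y \<in> M \<Longrightarrow> X - Y \<in> M"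
  using msubD(2)[of N M X "-Y"] msub_minus[of N M Y] by simp

lemma msub_sum: assumes "msub N M" "finite A" "\<And>i. i \<in> A \<Longrightarrow> f i \<in> M" shows "(\<Sum>i\<in>A. f i) \<in> M"
  using assms(2,3) by (induction A rule: finite_induct) (auto simp: msubD[OF assms(1)])

lemma msub_msc_inv: "msub N M \<Longrightarrow> msc c X \<in> M \<Longrightarrow> c \<noteq> 0 \<Longrightarrow> X \<in> M"
  using msubD(3)[of N M "msc c X" "inverse c"] by (simp add: msc_msc msc_1)

lemma split2:
  assumes M: "msub N M" and s: "X1 + X2 \<in> M" and D: "D \<in> M"
    and e1: "mbr N D X1 = msc l1 X1" and e2: "mbr N D X2 = msc l2 X2" and l: "l1 \<noteq> l2"
  shows "X1 \<in> M" "X2 \<in> M"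
proof -
  have "mbr N D (X1 + X2) - msc l2 (X1 + X2) \<in> M"
    by (rule msub_diff[OF M msubD(4)[OF M D s] msubD(3)[OF M s]])
  also have "mbr N D (X1 + X2) - msc l2 (X1 + X2) = msc (l1 - l2) X1"
    by (simp add: mbr_add2 e1 e2 msc_add msc_diffc[symmetric])
  finally show "X1 \<in> M" using l M msub_msc_inv by auto
  then have "(X1 + X2) - X1 \<in> M" using M s msub_diff by blast
  then show "X2 \<in> M" by simp
qed

definition loc :: "nat \<Rightarrow> mat \<Rightarrow> tup" where
  "loc k X = (\<lambda>j. if j = k then X else 0)"

lemma lie_gen_diff: "x \<in> lie_gen N S \<Longrightarrow> y \<in> lie_gen N S \<Longrightarrow> x - y \<in> lie_gen N S"
proof -
  assume x: "x \<in> lie_gen N S" and y: "y \<in> lie_gen N S"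
  have "tadd x (tsmul (-1) y) \<in> lie_gen N S" using x y by (intro lie_gen.add lie_gen.smul)
  moreover have "tadd x (tsmul (-1) y) = x - y" by (rule ext)+ (simp add: tadd_def tsmul_def)
  ultimately show ?thesis by simp
qed

lemma lie_gen_plus: "x \<in> lie_gen N S \<Longrightarrow> y \<in> lie_gen N S \<Longrightarrow> x + y \<in> lie_gen N S"
  using lie_gen.add[of x N S y] by (simp add: tadd_plus)

lemma lie_gen_0: "0 \<in> lie_gen N S"
  using lie_gen.zero[of N S] by (simp add: zero_fun_def)

lemma lie_gen_sum: "finite A \<Longrightarrow> (\<And>i. i \<in> A \<Longrightarrow> f i \<in> lie_gen N S) \<Longrightarrow> (\<Sum>i\<in>A. f i) \<in> lie_gen N S"
  by (induction A rule: finite_induct) (auto simp: lie_gen_0 lie_gen_plus)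

lemma lie_br_add2: "lie_br N w (x + y) = lie_br N w x + lie_br N w y"
  by (rule ext)+ (simp add: lie_br_def sum.distrib[symmetric] algebra_simps)

lemma lie_br_0: "lie_br N w 0 = 0"
  by (rule ext)+ (simp add: lie_br_def)

lemma sum_app: "(\<Sum>i\<in>A. f i) x = (\<Sum>i\<in>A. f i x)"
  by (induction A rule: infinite_finite_induct) auto

lemma lie_br_sum: "lie_br N w (\<Sum>i\<in>A. f i) = (\<Sum>i\<in>A. lie_br N w (f i))"
proof (rule ext)+
  fix k r s
  show "lie_br N w (\<Sum>i\<in>A. f i) k r s = (\<Sum>i\<in>A. lie_br N w (f i)) k r s"
    by (simp add: lie_br_def sum_app sum_distrib_left sum_distrib_right sum_subtractf[symmetric])
      (rule sum.swap)
qed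

lemma lie_br_tsmul2: "lie_br N w (tsmul c x) = tsmul c (lie_br N w x)"
  by (rule ext)+ (simp add: lie_br_def tsmul_def sum_distrib_left algebra_simps)

lemma tsmul_add: "tsmul c (x + y) = tsmul c x + tsmul c y" by (rule ext)+ (simp add: tsmul_def algebra_simps)
lemma tsmul_sum: "tsmul c (\<Sum>i\<in>A. f i) = (\<Sum>i\<in>A. tsmul c (f i))"
  by (rule ext)+ (simp add: tsmul_def sum_app sum_distrib_left)

lemma tsmul_1: "tsmul 1 x = x" by (rule ext)+ (simp add: tsmul_def)
lemma tsmul_tsmul: "tsmul c (tsmul d x) = tsmul (c*d) x" by (rule ext)+ (simp add: tsmul_def)
lemma tsmul_diff: "tsmul c x - tsmul d x = tsmul (c-d) x" by (rule ext)+ (simp add: tsmul_def algebra_simps)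

lemma sep:
  assumes "finite J"
  shows "(\<Sum>j\<in>J. Y j) \<in> lie_gen N S \<Longrightarrow> W \<in> lie_gen N S \<Longrightarrow>
    (\<forall>j\<in>J. lie_br N W (Y j) = tsmul (lam j) (Y j)) \<Longrightarrow> inj_on lam J \<Longrightarrow> \<forall>j\<in>J. Y j \<in> lie_gen N S"
  using assms
proof (induction J arbitrary: Y rule: finite_induct)
  case empty then show ?case by simp
next
  case (insert j0 F)
  let ?G = "lie_gen N S"
  define Y' where "Y' j = tsmul (lam j - lam j0) (Y j)" for j
  have sumI: "(\<Sum>j\<in>insert j0 F. Y j) = Y j0 + (\<Sum>j\<in>F. Y j)" using insert by simp
  have "lie_br N W (\<Sum>j\<in>insert j0 F. Y j) - tsmul (lam j0) (\<Sum>j\<in>insert j0 F. Y j) \<in> ?G"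
    by (intro lie_gen_diff lie_gen.br lie_gen.smul insert.prems(1) insert.prems(2))
  also have "lie_br N W (\<Sum>j\<in>insert j0 F. Y j) - tsmul (lam j0) (\<Sum>j\<in>insert j0 F. Y j)
      = (\<Sum>j\<in>F. Y' j)"
  proof -
    have "lie_br N W (\<Sum>j\<in>insert j0 F. Y j) = (\<Sum>j\<in>insert j0 F. tsmul (lam j) (Y j))"
      unfolding lie_br_sum using insert.prems(3) by (intro sum.cong) auto
    moreover have "tsmul (lam j0) (\<Sum>j\<in>insert j0 F. Y j) = (\<Sum>j\<in>insert j0 F. tsmul (lam j0) (Y j))"
      by (rule tsmul_sum)
    ultimately have "lie_br N W (\<Sum>j\<in>insert j0 F. Y j) - tsmul (lam j0) (\<Sum>j\<in>insert j0 F. Y j)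
        = (\<Sum>j\<in>insert j0 F. tsmul (lam j) (Y j) - tsmul (lam j0) (Y j))"
      by (simp add: sum_subtractf)
    also have "\<dots> = (\<Sum>j\<in>insert j0 F. Y' j)" by (simp add: Y'_def tsmul_diff)
    also have "\<dots> = (\<Sum>j\<in>F. Y' j)" using insert by (simp add: Y'_def tsmul_def zero_fun_def)
    finally show ?thesis .
  qed
  finally have s': "(\<Sum>j\<in>F. Y' j) \<in> ?G" .
  have e': "\<forall>j\<in>F. lie_br N W (Y' j) = tsmul (lam j) (Y' j)"
    using insert.prems by (auto simp: Y'_def lie_br_tsmul2 tsmul_tsmul mult.commute)
  have inj: "inj_on lam F" using insert.prems by (auto simp: inj_on_def)
  have IH: "\<forall>j\<in>F. Y' j \<in> ?G" using insert.IH[OF s' insert.prems(2) e' inj] insert.hyps by simp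
  have YF: "\<forall>j\<in>F. Y j \<in> ?G"
  proof
    fix j assume j: "j \<in> F"
    then have ne: "lam j - lam j0 \<noteq> 0" using insert.prems(4) insert.hyps by (auto simp: inj_on_def)
    have "tsmul (inverse (lam j - lam j0)) (Y' j) \<in> ?G" using IH j by (auto intro: lie_gen.smul)
    also have "tsmul (inverse (lam j - lam j0)) (Y' j) = Y j" using ne
      by (simp add: Y'_def tsmul_tsmul tsmul_1)
    finally show "Y j \<in> ?G" .
  qed
  have "(\<Sum>j\<in>insert j0 F. Y j) - (\<Sum>j\<in>F. Y j) \<in> ?G"
    by (rule lie_gen_diff[OF insert.prems(1) lie_gen_sum]) (use YF insert.hyps in auto)
  also have "(\<Sum>j\<in>insert j0 F. Y j) - (\<Sum>j\<in>F. Y j) = Y j0" by (simp only: sumI) simp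
  finally have "Y j0 \<in> ?G" .
  with YF show ?case by simp
qed


lemma lam_diff [simp]: "(\<lambda>a b. (X::mat) a b - Y a b) = X - Y" by (rule ext)+ simp
lemma lam_add [simp]: "(\<lambda>a b. (X::mat) a b + Y a b) = X + Y" by (rule ext)+ simp

lemma msc_0: "msc 0 X = 0" by (rule ext)+ (simp add: msc_def)
lemma mbr_uminus2: "mbr N D (- X) = - mbr N D X"
  by (rule ext)+ (simp add: mbr_def sum_negf[symmetric] fun_Compl_def)

lemma msc_self1: "X + msc c X = msc (1 + c) X" by (rule ext)+ (simp add: msc_def algebra_simps)
lemma msc_self2: "msc c X + X = msc (c + 1) X" by (rule ext)+ (simp add: msc_def algebra_simps)
lemma msc_self3: "X - msc c X = msc (1 - c) X" by (rule ext)+ (simp add: msc_def algebra_simps)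
lemma msc_self4: "msc c X - X = msc (c - 1) X" by (rule ext)+ (simp add: msc_def algebra_simps)

lemma msc_zero: "msc c 0 = 0" by (rule ext)+ (simp add: msc_def)
lemma msc_uminus: "msc c (- X) = - msc c X" by (rule ext)+ (simp add: msc_def)
lemma mbr_uminus1: "mbr N (- X) D = - mbr N X D"
  by (rule ext)+ (simp add: mbr_def sum_negf[symmetric] fun_Compl_def)

lemmas msimps = mbr_uminus1 mbr_uminus2 msc_zero msc_uminus mbr_simps msc_1 msc_0 msc_m1 msc_self1 msc_self2 msc_self3 msc_self4 msc_addc msc_diffc

lemma split2m:
  assumes M: "msub N M" and s: "X1 - X2 \<in> M" and D: "D \<in> M"
    and e1: "mbr N D X1 = msc l1 X1" and e2: "mbr N D X2 = msc l2 X2" and l: "l1 \<noteq> l2"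
  shows "X1 \<in> M" "X2 \<in> M"
proof -
  have s': "X1 + (- X2) \<in> M" using s by simp
  have "mbr N D (- X2) = - msc l2 X2" using e2 by (simp add: mbr_uminus2)
  also have "\<dots> = msc l2 (- X2)" by (rule ext)+ (simp add: msc_def fun_Compl_def)
  finally have e2': "mbr N D (- X2) = msc l2 (- X2)" .
  show "X1 \<in> M" using split2(1)[OF M s' D e1 e2' l] .
  have "- X2 \<in> M" using split2(2)[OF M s' D e1 e2' l] .
  then have "- (- X2) \<in> M" using msub_minus[OF M] by blast
  then show "X2 \<in> M" by simp
qed

lemma psi_e_lt: "i < n \<Longrightarrow> psi_e n a i = matE i (i+1) - matE (n+i+1) (n+i)"
  by (rule ext)+ (simp add: psi_e_def)
lemma psi_e_n: "psi_e n a n = matE n (n+1) + msc (inverse a) (matE 1 (2*n))"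
  by (rule ext)+ (simp add: psi_e_def msc_def)
lemma psi_f_lt: "i < n \<Longrightarrow> psi_f n a i = matE (i+1) i - matE (n+i) (n+i+1)"
  by (rule ext)+ (simp add: psi_f_def)
lemma psi_f_n: "psi_f n a n = matE (n+1) n + msc a (matE (2*n) 1)"
  by (rule ext)+ (simp add: psi_f_def msc_def)

lemma chev:
  assumes M: "msub N M" and C: "\<And>j. 1 \<le> j \<Longrightarrow> j < N \<Longrightarrow> matE j (j+1) \<in> M \<and> matE (j+1) j \<in> M"
  shows "1 \<le> p \<Longrightarrow> p \<le> N \<Longrightarrow> 1 \<le> q \<Longrightarrow> q \<le> N \<Longrightarrow> p \<noteq> q \<Longrightarrow> matE p q \<in> M"
proof -
  have up: "\<And>p. 1 \<le> p \<Longrightarrow> p + d + 1 \<le> N \<Longrightarrow> matE p (p+d+1) \<in> M" for d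
  proof (induction d)
    case 0 then show ?case using C[of p] by simp
  next
    case (Suc d)
    have "mbr N (matE p (p+d+1)) (matE (p+d+1) (p+d+2)) \<in> M"
      using Suc C[of "p+d+1"] by (intro msubD(4)[OF M]) auto
    moreover have "mbr N (matE p (p+d+1)) (matE (p+d+1) (p+d+2)) = matE p (p + Suc d + 1)"
      using Suc.prems by (simp add: msimps)
    ultimately show ?case by simp
  qed
  have dn: "\<And>q. 1 \<le> q \<Longrightarrow> q + d + 1 \<le> N \<Longrightarrow> matE (q+d+1) q \<in> M" for d
  proof (induction d)
    case 0 then show ?case using C[of q] by simp
  next
    case (Suc d)
    have "mbr N (matE (q+d+2) (q+d+1)) (matE (q+d+1) q) \<in> M"
      using Suc C[of "q+d+1"] by (intro msubD(4)[OF M]) auto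
    moreover have "mbr N (matE (q+d+2) (q+d+1)) (matE (q+d+1) q) = matE (q + Suc d + 1) q"
      using Suc.prems by (simp add: msimps)
    ultimately show ?case by simp
  qed
  assume "1 \<le> p" "p \<le> N" "1 \<le> q" "q \<le> N" "p \<noteq> q"
  then show "matE p q \<in> M"
  proof (cases "p < q")
    case True
    then obtain d where "q = p + d + 1" by (metis add.commute add_Suc less_imp_Suc_add plus_1_eq_Suc)
    then show ?thesis using up[of p d] \<open>q \<le> N\<close> \<open>1 \<le> p\<close> by simp
  next
    case False
    then have "q < p" using \<open>p \<noteq> q\<close> by simp
    then obtain d where "p = q + d + 1" by (metis add.commute add_Suc less_imp_Suc_add plus_1_eq_Suc)
    then show ?thesis using dn[of q d] \<open>p \<le> N\<close> \<open>1 \<le> q\<close> by simp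
  qed
qed


lemma S1:
  assumes M: "msub (2*n) M" and n3: "3 \<le> n" and a0: "a \<noteq> 0" and a1: "a \<noteq> 1" and am1: "a \<noteq> -1"
    and gE: "\<And>i. 1 \<le> i \<Longrightarrow> i \<le> n \<Longrightarrow> psi_e n a i \<in> M"
    and gF: "\<And>i. 1 \<le> i \<Longrightarrow> i \<le> n \<Longrightarrow> psi_f n a i \<in> M"
  shows "1 \<le> p \<Longrightarrow> p \<le> 2*n \<Longrightarrow> 1 \<le> q \<Longrightarrow> q \<le> 2*n \<Longrightarrow> p \<noteq> q \<Longrightarrow> matE p q \<in> M"
proof -
  note add = msubD(2)[OF M] and sc = msubD(3)[OF M] and br = msubD(4)[OF M]
    and df = msub_diff[OF M] and inv = msub_msc_inv[OF M]
  have eL: "\<And>i. 1 \<le> i \<Longrightarrow> i < n \<Longrightarrow> matE i (i+1) - matE (n+i+1) (n+i) \<in> M"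
    using gE psi_e_lt by fastforce
  have fL: "\<And>i. 1 \<le> i \<Longrightarrow> i < n \<Longrightarrow> matE (i+1) i - matE (n+i) (n+i+1) \<in> M"
    using gF psi_f_lt by fastforce
  have eN: "matE n (n+1) + msc (inverse a) (matE 1 (2*n)) \<in> M"
    using gE[of n] n3 psi_e_n by simp
  have fN: "matE (n+1) n + msc a (matE (2*n) 1) \<in> M"
    using gF[of n] n3 psi_f_n by simp
  define uu where "uu d = matE 1 (d+2) - matE (n+d+2) (n+1)" for d
  have u: "d + 1 \<le> n - 1 \<Longrightarrow> uu d \<in> M" for d
  proof (induction d)
    case 0
    have "uu 0 = matE 1 (1+1) - matE (n+1+1) (n+1)" unfolding uu_def by (simp add: numeral_eq_Suc)
    then show ?case using eL[of 1] n3 by simp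
  next
    case (Suc d)
    have "mbr (2*n) (uu d) (matE (d+2) (d+3) - matE (n+d+3) (n+d+2)) \<in> M"
      using Suc eL[of "d+2"] by (intro br) (auto simp: numeral_eq_Suc)
    moreover have "mbr (2*n) (uu d) (matE (d+2) (d+3) - matE (n+d+3) (n+d+2)) = uu (Suc d)"
      using Suc.prems n3 by (auto simp: msimps uu_def numeral_eq_Suc)
    ultimately show ?case by simp
  qed
  have un: "matE 1 n - matE (2*n) (n+1) \<in> M"
  proof -
    have e1: "n - 2 + 2 = n" and e2: "n + (n-2) + 2 = 2*n" using n3 by auto
    show ?thesis using u[of "n-2"] n3 unfolding uu_def e1 e2 by simp
  qed
  have "mbr (2*n) (matE 1 n - matE (2*n) (n+1)) (matE n (n+1) + msc (inverse a) (matE 1 (2*n))) \<in> M"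
    using un eN by (rule br)
  moreover have "mbr (2*n) (matE 1 n - matE (2*n) (n+1)) (matE n (n+1) + msc (inverse a) (matE 1 (2*n)))
      = msc (1 + inverse a) (matE 1 (n+1))"
    using n3 by (simp add: msimps)
  ultimately have "msc (1 + inverse a) (matE 1 (n+1)) \<in> M" by simp
  moreover have "1 + inverse a \<noteq> 0" using am1 a0
    by (metis add.inverse_inverse eq_neg_iff_add_eq_0 inverse_minus_eq inverse_1 inverse_inverse_eq)
  ultimately have E1n: "matE 1 (n+1) \<in> M" by (rule inv)
  define vv where "vv d = matE (d+2) 1 - matE (n+1) (n+d+2)" for d
  have v: "d + 1 \<le> n - 1 \<Longrightarrow> vv d \<in> M" for d
  proof (induction d)
    case 0
    have "vv 0 = matE (1+1) 1 - matE (n+1) (n+1+1)" unfolding vv_def by (simp add: numeral_eq_Suc)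
    then show ?case using fL[of 1] n3 by simp
  next
    case (Suc d)
    have "mbr (2*n) (matE (d+3) (d+2) - matE (n+d+2) (n+d+3)) (vv d) \<in> M"
      using Suc fL[of "d+2"] by (intro br) (auto simp: numeral_eq_Suc)
    moreover have "mbr (2*n) (matE (d+3) (d+2) - matE (n+d+2) (n+d+3)) (vv d) = vv (Suc d)"
      using Suc.prems n3 by (auto simp: msimps vv_def numeral_eq_Suc)
    ultimately show ?case by simp
  qed
  have vn: "matE n 1 - matE (n+1) (2*n) \<in> M"
  proof -
    have e1: "n - 2 + 2 = n" and e2: "n + (n-2) + 2 = 2*n" using n3 by auto
    show ?thesis using v[of "n-2"] n3 unfolding vv_def e1 e2 by simp
  qed
  have "mbr (2*n) (matE (n+1) n + msc a (matE (2*n) 1)) (matE n 1 - matE (n+1) (2*n)) \<in> M"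
    using fN vn by (rule br)
  moreover have "mbr (2*n) (matE (n+1) n + msc a (matE (2*n) 1)) (matE n 1 - matE (n+1) (2*n))
      = msc (1 + a) (matE (n+1) 1)"
    using n3 by (simp add: msimps)
  ultimately have "msc (1 + a) (matE (n+1) 1) \<in> M" by simp
  moreover have "1 + a \<noteq> 0" using am1 by (metis add.commute add_eq_0_iff)
  ultimately have En1: "matE (n+1) 1 \<in> M" by (rule inv)
  define zz where "zz d = matE (d+2) (n+1) + matE 1 (n+d+2)" for d
  have z: "d + 1 \<le> n - 1 \<Longrightarrow> zz d \<in> M" for d
  proof (induction d)
    case 0
    have "mbr (2*n) (matE (1+1) 1 - matE (n+1) (n+1+1)) (matE 1 (n+1)) \<in> M"
      using fL[of 1] n3 E1n by (intro br) auto
    moreover have "mbr (2*n) (matE (1+1) 1 - matE (n+1) (n+1+1)) (matE 1 (n+1)) = zz 0"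
      using n3 by (auto simp: msimps zz_def numeral_eq_Suc)
    ultimately show ?case by simp
  next
    case (Suc d)
    have "mbr (2*n) (matE (d+3) (d+2) - matE (n+d+2) (n+d+3)) (zz d) \<in> M"
      using Suc fL[of "d+2"] by (intro br) (auto simp: numeral_eq_Suc)
    moreover have "mbr (2*n) (matE (d+3) (d+2) - matE (n+d+2) (n+d+3)) (zz d) = zz (Suc d)"
      using Suc.prems n3 by (auto simp: msimps zz_def numeral_eq_Suc)
    ultimately show ?case by simp
  qed
  have zn: "matE n (n+1) + matE 1 (2*n) \<in> M"
  proof -
    have e1: "n - 2 + 2 = n" and e2: "n + (n-2) + 2 = 2*n" using n3 by auto
    show ?thesis using z[of "n-2"] n3 unfolding zz_def e1 e2 by simp
  qed
  define zp where "zp d = matE (n+1) (d+2) + matE (n+d+2) 1" for d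
  have z': "d + 1 \<le> n - 1 \<Longrightarrow> zp d \<in> M" for d
  proof (induction d)
    case 0
    have "mbr (2*n) (matE (n+1) 1) (matE 1 (1+1) - matE (n+1+1) (n+1)) \<in> M"
      using eL[of 1] n3 En1 by (intro br) auto
    moreover have "mbr (2*n) (matE (n+1) 1) (matE 1 (1+1) - matE (n+1+1) (n+1)) = zp 0"
      using n3 by (auto simp: msimps zp_def numeral_eq_Suc)
    ultimately show ?case by simp
  next
    case (Suc d)
    have "mbr (2*n) (zp d) (matE (d+2) (d+3) - matE (n+d+3) (n+d+2)) \<in> M"
      using Suc eL[of "d+2"] by (intro br) (auto simp: numeral_eq_Suc)
    moreover have "mbr (2*n) (zp d) (matE (d+2) (d+3) - matE (n+d+3) (n+d+2)) = zp (Suc d)"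
      using Suc.prems n3 by (auto simp: msimps zp_def numeral_eq_Suc)
    ultimately show ?case by simp
  qed
  have zpn: "matE (n+1) n + matE (2*n) 1 \<in> M"
  proof -
    have e1: "n - 2 + 2 = n" and e2: "n + (n-2) + 2 = 2*n" using n3 by auto
    show ?thesis using z'[of "n-2"] n3 unfolding zp_def e1 e2 by simp
  qed
  have "(matE n (n+1) + msc (inverse a) (matE 1 (2*n))) - (matE n (n+1) + matE 1 (2*n)) \<in> M"
    using eN zn by (rule df)
  moreover have "(matE n (n+1) + msc (inverse a) (matE 1 (2*n))) - (matE n (n+1) + matE 1 (2*n))
     = msc (inverse a - 1) (matE 1 (2*n))" by (simp add: msimps)
  moreover have "inverse a - 1 \<noteq> 0" using a1 by auto
  ultimately have E12n: "matE 1 (2*n) \<in> M" using inv by auto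
  have "(matE (n+1) n + msc a (matE (2*n) 1)) - (matE (n+1) n + matE (2*n) 1) \<in> M"
    using fN zpn by (rule df)
  moreover have "(matE (n+1) n + msc a (matE (2*n) 1)) - (matE (n+1) n + matE (2*n) 1)
     = msc (a - 1) (matE (2*n) 1)" by (simp add: msimps)
  moreover have "a - 1 \<noteq> 0" using a1 by auto
  ultimately have E2n1: "matE (2*n) 1 \<in> M" using inv by auto
  have Enn1: "matE n (n+1) \<in> M"
    using df[OF zn E12n] by simp
  have En1n: "matE (n+1) n \<in> M"
    using df[OF zpn E2n1] by simp
  have D0: "matE 1 1 - matE (2*n) (2*n) \<in> M"
  proof -
    have "mbr (2*n) (matE 1 (2*n)) (matE (2*n) 1) \<in> M" using E12n E2n1 by (rule br)
    moreover have "mbr (2*n) (matE 1 (2*n)) (matE (2*n) 1) = matE 1 1 - matE (2*n) (2*n)"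
      using n3 by (simp add: msimps)
    ultimately show ?thesis by simp
  qed
  have P1: "matE 1 2 \<in> M \<and> matE 2 1 \<in> M \<and> matE (n+2) (n+1) \<in> M \<and> matE (n+1) (n+2) \<in> M"
  proof -
    have e1: "matE 1 2 - matE (n+2) (n+1) \<in> M" using eL[of 1] n3 by (simp add: numeral_eq_Suc)
    have f1: "matE 2 1 - matE (n+1) (n+2) \<in> M" using fL[of 1] n3 by (simp add: numeral_eq_Suc)
    have "matE 1 2 \<in> M \<and> matE (n+2) (n+1) \<in> M"
      using split2m[OF M e1 D0, of 1 0] n3 by (simp add: msimps)
    moreover have "matE 2 1 \<in> M \<and> matE (n+1) (n+2) \<in> M"
      using split2m[OF M f1 D0, of "-1" 0] n3 by (simp add: msimps)
    ultimately show ?thesis by simp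
  qed
  have P: "d + 1 \<le> n - 1 \<Longrightarrow> matE (d+1) (d+2) \<in> M \<and> matE (d+2) (d+1) \<in> M \<and>
      matE (n+d+2) (n+d+1) \<in> M \<and> matE (n+d+1) (n+d+2) \<in> M" for d
  proof (induction d)
    case 0 then show ?case using P1 by (simp add: numeral_eq_Suc)
  next
    case (Suc d)
    then have IH: "matE (d+1) (d+2) \<in> M" "matE (d+2) (d+1) \<in> M" by auto
    have bnd: "Suc (Suc d) \<le> 2*n" "Suc d \<le> 2*n" "Suc (Suc (Suc d)) \<le> 2*n" "d + 3 \<le> 2*n" "d + 3 \<le> n"
      using Suc.prems by auto
    have D: "matE (d+1) (d+1) - matE (d+2) (d+2) \<in> M"
    proof -
      have "mbr (2*n) (matE (d+1) (d+2)) (matE (d+2) (d+1)) \<in> M" using IH by (rule br)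
      moreover have "mbr (2*n) (matE (d+1) (d+2)) (matE (d+2) (d+1)) = matE (d+1) (d+1) - matE (d+2) (d+2)"
        using n3 Suc.prems by (auto simp: msimps)
      ultimately show ?thesis by simp
    qed
    have e: "matE (d+2) (d+3) - matE (n+d+3) (n+d+2) \<in> M"
      using eL[of "d+2"] Suc.prems by (simp add: numeral_eq_Suc)
    have f: "matE (d+3) (d+2) - matE (n+d+2) (n+d+3) \<in> M"
      using fL[of "d+2"] Suc.prems by (simp add: numeral_eq_Suc)
    have "matE (d+2) (d+3) \<in> M \<and> matE (n+d+3) (n+d+2) \<in> M"
      using split2m[OF M e D, of "-1" 0] n3 Suc.prems bnd by (simp add: msimps)
    moreover have "matE (d+3) (d+2) \<in> M \<and> matE (n+d+2) (n+d+3) \<in> M"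
      using split2m[OF M f D, of 1 0] n3 Suc.prems bnd by (simp add: msimps)
    ultimately show ?case by (simp add: numeral_eq_Suc)
  qed
  have C: "matE j (j+1) \<in> M \<and> matE (j+1) j \<in> M" if "1 \<le> j" "j < 2*n" for j
  proof -
    consider "j < n" | "j = n" | "n < j" by arith
    then show ?thesis
    proof cases
      case 1 then show ?thesis using P[of "j-1"] that by simp
    next
      case 2 then show ?thesis using Enn1 En1n by simp
    next
      case 3
      then have "n + (j - n - 1) + 1 = j" "n + (j - n - 1) + 2 = j + 1" "j - n - 1 + 1 \<le> n - 1" using that by auto
      then show ?thesis using P[of "j-n-1"] by metis
    qed
  qed
  show "1 \<le> p \<Longrightarrow> p \<le> 2*n \<Longrightarrow> 1 \<le> q \<Longrightarrow> q \<le> 2*n \<Longrightarrow> p \<noteq> q \<Longrightarrow> matE p q \<in> M"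
    using chev[OF M C] by blast
qed


definition sg :: "nat \<Rightarrow> nat \<Rightarrow> nat" where "sg n j = (if j \<le> n then j + n else j - n)"
definition Bm :: "nat \<Rightarrow> nat \<Rightarrow> nat \<Rightarrow> mat" where "Bm n p q = matE p q - matE (sg n q) (sg n p)"

lemma S2:
  assumes M: "msub (2*n) M" and n3: "3 \<le> n"
    and gE: "\<And>i. 1 \<le> i \<Longrightarrow> i \<le> n \<Longrightarrow> psi_e n (-1) i \<in> M"
    and gF: "\<And>i. 1 \<le> i \<Longrightarrow> i \<le> n \<Longrightarrow> psi_f n (-1) i \<in> M"
  shows "1 \<le> p \<Longrightarrow> p \<le> 2*n \<Longrightarrow> 1 \<le> q \<Longrightarrow> q \<le> 2*n \<Longrightarrow> Bm n p q \<in> M"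
proof -
  note add = msubD(2)[OF M] and sc = msubD(3)[OF M] and br = msubD(4)[OF M]
    and df = msub_diff[OF M] and inv = msub_msc_inv[OF M] and mn = msub_minus[OF M]
  have eL: "\<And>i. 1 \<le> i \<Longrightarrow> i < n \<Longrightarrow> matE i (i+1) - matE (n+i+1) (n+i) \<in> M"
    using gE psi_e_lt by fastforce
  have fL: "\<And>i. 1 \<le> i \<Longrightarrow> i < n \<Longrightarrow> matE (i+1) i - matE (n+i) (n+i+1) \<in> M"
    using gF psi_f_lt by fastforce
  have eN: "matE n (n+1) - matE 1 (2*n) \<in> M"
    using gE[of n] n3 psi_e_n[of n "-1"] by (simp add: msimps)
  have fN: "matE (n+1) n - matE (2*n) 1 \<in> M"
    using gF[of n] n3 psi_f_n[of n "-1"] by (simp add: msimps)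
  define GG where "GG p q = matE p q - matE (n+q) (n+p)" for p q
  have up: "\<And>p. 1 \<le> p \<Longrightarrow> p + d + 1 \<le> n \<Longrightarrow> GG p (p+d+1) \<in> M" for d
  proof (induction d)
    case 0 then show ?case using eL[of p] by (simp add: GG_def)
  next
    case (Suc d)
    have "mbr (2*n) (GG p (p+d+1)) (GG (p+d+1) (p+d+2)) \<in> M"
      using Suc eL[of "p+d+1"] by (intro br) (auto simp: GG_def numeral_eq_Suc)
    moreover have "mbr (2*n) (GG p (p+d+1)) (GG (p+d+1) (p+d+2)) = GG p (p + Suc d + 1)"
      using Suc.prems by (auto simp: msimps GG_def)
    ultimately show ?case by simp
  qed
  have dn: "\<And>q. 1 \<le> q \<Longrightarrow> q + d + 1 \<le> n \<Longrightarrow> GG (q+d+1) q \<in> M" for d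
  proof (induction d)
    case 0 then show ?case using fL[of q] by (simp add: GG_def)
  next
    case (Suc d)
    have "mbr (2*n) (GG (q+d+2) (q+d+1)) (GG (q+d+1) q) \<in> M"
      using Suc fL[of "q+d+1"] by (intro br) (auto simp: GG_def numeral_eq_Suc)
    moreover have "mbr (2*n) (GG (q+d+2) (q+d+1)) (GG (q+d+1) q) = GG (q + Suc d + 1) q"
      using Suc.prems by (auto simp: msimps GG_def)
    ultimately show ?case by simp
  qed
  have G: "GG p q \<in> M" if "1 \<le> p" "p \<le> n" "1 \<le> q" "q \<le> n" "p \<noteq> q" for p q
  proof (cases "p < q")
    case True
    then obtain d where "q = p + d + 1" by (metis add.commute add_Suc less_imp_Suc_add plus_1_eq_Suc)
    then show ?thesis using up[of p d] that by simp
  next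
    case False
    then have "q < p" using that by simp
    then obtain d where "p = q + d + 1" by (metis add.commute add_Suc less_imp_Suc_add plus_1_eq_Suc)
    then show ?thesis using dn[of q d] that by simp
  qed
  define HH where "HH p = matE p p - matE (n+p) (n+p)" for p
  have Hdiff: "HH p - HH q \<in> M" if "1 \<le> p" "p \<le> n" "1 \<le> q" "q \<le> n" "p \<noteq> q" for p q
  proof -
    have "mbr (2*n) (GG p q) (GG q p) \<in> M" using G that by (intro br) auto
    moreover have "mbr (2*n) (GG p q) (GG q p) = HH p - HH q"
      using that by (auto simp: msimps GG_def HH_def)
    ultimately show ?thesis by simp
  qed
  have Hsum: "HH 1 + HH n \<in> M"
  proof -
    have "mbr (2*n) (matE n (n+1) - matE 1 (2*n)) (matE (n+1) n - matE (2*n) 1) \<in> M" using eN fN by (rule br)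
    moreover have "mbr (2*n) (matE n (n+1) - matE 1 (2*n)) (matE (n+1) n - matE (2*n) 1) = HH 1 + HH n"
      using n3 by (auto simp: msimps HH_def mult_2)
    ultimately show ?thesis by simp
  qed
  have H1: "HH 1 \<in> M"
  proof -
    have "(HH 1 + HH n) + (HH 1 - HH n) \<in> M" using add[OF Hsum Hdiff[of 1 n]] n3 by simp
    moreover have "(HH 1 + HH n) + (HH 1 - HH n) = msc 2 (HH 1)"
      by (rule ext)+ (simp add: msc_def)
    ultimately show ?thesis using inv by fastforce
  qed
  have H: "HH p \<in> M" if "1 \<le> p" "p \<le> n" for p
  proof (cases "p = 1")
    case True then show ?thesis using H1 by simp
  next
    case False
    have "HH 1 - (HH 1 - HH p) \<in> M" using df[OF H1 Hdiff[of 1 p]] that False by simp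
    then show ?thesis by simp
  qed
  define KK where "KK p l = matE p (n+l) - matE l (n+p)" for p l
  have K1: "KK p 1 \<in> M" if "1 \<le> p" "p \<le> n" for p
  proof (cases "p = n")
    case True then show ?thesis using eN by (simp add: KK_def mult_2)
  next
    case False
    have "mbr (2*n) (GG p n) (matE n (n+1) - matE 1 (2*n)) \<in> M" using G[of p n] eN that False by (intro br) auto
    moreover have "mbr (2*n) (GG p n) (matE n (n+1) - matE 1 (2*n)) = KK p 1"
      using that False n3 by (auto simp: msimps GG_def KK_def)
    ultimately show ?thesis by simp
  qed
  have K: "KK p l \<in> M" if "1 \<le> p" "p \<le> n" "1 \<le> l" "l \<le> n" for p l
  proof -
    consider "l = 1" | "p = l" | "p = 1" "l \<noteq> 1" | "p \<noteq> 1" "l \<noteq> 1" "p \<noteq> l" by blast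
    then show ?thesis
    proof cases
      case 1 then show ?thesis using K1 that by simp
    next
      case 2 then show ?thesis using msubD(1)[OF M] by (simp add: KK_def mult_2)
    next
      case 3
      have "- KK l 1 \<in> M" using K1[of l] that by (intro mn) auto
      moreover have "- KK l 1 = KK p l" using 3 by (simp add: KK_def)
      ultimately show ?thesis by simp
    next
      case 4
      have "mbr (2*n) (GG l 1) (KK p 1) \<in> M" using G[of l 1] K1[of p] that 4 by (intro br) auto
      moreover have "mbr (2*n) (GG l 1) (KK p 1) = KK p l"
        using that 4 n3 by (auto simp: msimps GG_def KK_def)
      ultimately show ?thesis by simp
    qed
  qed
  define LL where "LL l p = matE (n+l) p - matE (n+p) l" for l p
  have L1: "LL 1 p \<in> M" if "1 \<le> p" "p \<le> n" for p
  proof (cases "p = n")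
    case True then show ?thesis using fN by (simp add: LL_def mult_2)
  next
    case False
    have "mbr (2*n) (matE (n+1) n - matE (2*n) 1) (GG n p) \<in> M" using G[of n p] fN that False by (intro br) auto
    moreover have "mbr (2*n) (matE (n+1) n - matE (2*n) 1) (GG n p) = LL 1 p"
      using that False n3 by (auto simp: msimps GG_def LL_def)
    ultimately show ?thesis by simp
  qed
  have L: "LL l p \<in> M" if "1 \<le> p" "p \<le> n" "1 \<le> l" "l \<le> n" for p l
  proof -
    consider "l = 1" | "p = l" | "p = 1" "l \<noteq> 1" | "p \<noteq> 1" "l \<noteq> 1" "p \<noteq> l" by blast
    then show ?thesis
    proof cases
      case 1 then show ?thesis using L1 that by simp
    next
      case 2 then show ?thesis using msubD(1)[OF M] by (simp add: LL_def mult_2)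
    next
      case 3
      have "- LL 1 l \<in> M" using L1[of l] that by (intro mn) auto
      moreover have "- LL 1 l = LL l p" using 3 by (simp add: LL_def)
      ultimately show ?thesis by simp
    next
      case 4
      have "mbr (2*n) (LL 1 p) (GG 1 l) \<in> M" using G[of 1 l] L1[of p] that 4 by (intro br) auto
      moreover have "mbr (2*n) (LL 1 p) (GG 1 l) = LL l p"
        using that 4 n3 by (auto simp: msimps GG_def LL_def)
      ultimately show ?thesis by simp
    qed
  qed
  assume p: "1 \<le> p" "p \<le> 2*n" and q: "1 \<le> q" "q \<le> 2*n"
  consider "p \<le> n" "q \<le> n" | "p \<le> n" "n < q" | "n < p" "q \<le> n" | "n < p" "n < q" by arith
  then show "Bm n p q \<in> M"
  proof cases
    case 1
    show ?thesis
    proof (cases "p = q")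
      case True then show ?thesis using H[of p] p 1 by (simp add: Bm_def sg_def HH_def add.commute)
    next
      case False then show ?thesis using G[of p q] p q 1 by (simp add: Bm_def sg_def GG_def add.commute)
    qed
  next
    case 2
    then have "Bm n p q = KK p (q - n)" by (simp add: Bm_def sg_def KK_def add.commute)
    then show ?thesis using K[of p "q-n"] p q 2 by simp
  next
    case 3
    then have "Bm n p q = LL (p - n) q" by (simp add: Bm_def sg_def LL_def add.commute)
    then show ?thesis using L[of q "p-n"] p q 3 by simp
  next
    case 4
    show ?thesis
    proof (cases "p = q")
      case True
      then have "Bm n p q = - HH (p - n)" using 4 by (simp add: Bm_def sg_def HH_def)
      then show ?thesis using mn[OF H[of "p-n"]] p 4 by simp
    next
      case False
      then have "Bm n p q = - GG (q - n) (p - n)" using 4 by (simp add: Bm_def sg_def GG_def)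
      then show ?thesis using mn[OF G[of "q-n" "p-n"]] p q 4 False by simp
    qed
  qed
qed


definition Mset :: "nat \<Rightarrow> tup set \<Rightarrow> nat \<Rightarrow> mat set" where
  "Mset N S k = {X. loc k X \<in> lie_gen N S}"

lemma loc_add: "loc k (X + Y) = tadd (loc k X) (loc k Y)"
  by (rule ext)+ (simp add: loc_def tadd_def)
lemma loc_msc: "loc k (msc c X) = tsmul c (loc k X)"
  by (rule ext)+ (simp add: loc_def tsmul_def msc_def)
lemma loc_mbr: "loc k (mbr N X Y) = lie_br N (loc k X) (loc k Y)"
  by (rule ext)+ (simp add: loc_def lie_br_def mbr_def)
lemma loc_0: "loc k 0 = (\<lambda>k r s. 0)"
  by (rule ext)+ (simp add: loc_def)

lemma msub_Mset: "msub N (Mset N S k)"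
  unfolding msub_def Mset_def
  by (auto simp: loc_add loc_msc loc_mbr loc_0 intro: lie_gen.intros)

lemma lie_br_loc: "lie_br N g (loc k X) = loc k (mbr N (g k) X)"
  by (rule ext)+ (simp add: loc_def lie_br_def mbr_def)

lemma Mset_gen: "g \<in> lie_gen N S \<Longrightarrow> X \<in> Mset N S k \<Longrightarrow> mbr N (g k) X \<in> Mset N S k"
  unfolding Mset_def using lie_gen.br[of g N S "loc k X"] by (simp add: lie_br_loc)

lemma lie_br_tup: "lie_br N (tup_of K f) (tup_of K g) = tup_of K (\<lambda>k. mbr N (f k) (g k))"
  by (rule ext)+ (auto simp: tup_of_def lie_br_def mbr_def)

lemma tup_sum: "tup_of K f = (\<Sum>k\<in>{1..K}. loc k (f k))"
proof (rule ext)+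
  fix k r s
  have "(\<Sum>j\<in>{1..K}. loc j (f j)) k r s = (\<Sum>j\<in>{1..K}. if j = k then f k r s else 0)"
    unfolding sum_app by (rule sum.cong) (auto simp: loc_def)
  also have "\<dots> = tup_of K f k r s" by (simp add: tup_of_def)
  finally show "tup_of K f k r s = (\<Sum>j\<in>{1..K}. loc j (f j)) k r s" by simp
qed

lemma c_inj:
  fixes x y :: complex
  assumes "x \<noteq> 0" "y \<noteq> 0" "(1 + inverse x) * (1 + x) = (1 + inverse y) * (1 + y)"
  shows "x = y \<or> x = inverse y"
proof -
  have "(1 + inverse x) * (1 + x) = 2 + x + inverse x" using assms(1) by (simp add: field_simps)
  moreover have "(1 + inverse y) * (1 + y) = 2 + y + inverse y" using assms(2) by (simp add: field_simps)
  ultimately have "x + inverse x = y + inverse y" using assms(3) by simp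
  then have "(x - y) * (x * y - 1) = 0" using assms(1,2) by (simp add: field_simps)
  then have "x - y = 0 \<or> x * y - 1 = 0" by simp
  then show ?thesis
  proof
    assume "x * y - 1 = 0"
    then have "x = inverse y" using assms(2) by (simp add: field_simps)
    then show ?thesis by simp
  qed simp
qed


locale ctx =
  fixes n K :: nat and a :: "nat \<Rightarrow> complex"
  assumes n3: "n \<ge> 3" and K1: "K \<ge> 1"
    and anz: "\<forall>k\<in>{1..K}. a k \<noteq> 0"
    and adist: "\<forall>k\<in>{1..K}. \<forall>j\<in>{1..K}. k \<noteq> j \<longrightarrow> a k \<noteq> a j \<and> a k \<noteq> inverse (a j)"
    and a1: "a 1 = -1" and ane1: "\<forall>k\<in>{2..K}. a k \<noteq> 1"
begin

definition "GS = (psiA_e n K a ` {1..n}) \<union> (psiA_f n K a ` {1..n})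
      \<union> ((\<lambda>i. lie_br (2*n) (psiA_e n K a i) (psiA_f n K a i)) ` {1..n})"

abbreviation "G \<equiv> lie_gen (2*n) GS"

lemma G_eq: "psi_image n K a = G"
  by (simp add: psi_image_def GS_def)

lemma EG: "1 \<le> i \<Longrightarrow> i \<le> n \<Longrightarrow> tup_of K (\<lambda>k. psi_e n (a k) i) \<in> G"
  by (rule lie_gen.gen) (auto simp: GS_def psiA_e_def)
lemma FG: "1 \<le> i \<Longrightarrow> i \<le> n \<Longrightarrow> tup_of K (\<lambda>k. psi_f n (a k) i) \<in> G"
  by (rule lie_gen.gen) (auto simp: GS_def psiA_f_def)

lemma EGl: "1 \<le> i \<Longrightarrow> i < n \<Longrightarrow> tup_of K (\<lambda>k. matE i (i+1) - matE (n+i+1) (n+i)) \<in> G"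
  using EG[of i] by (simp add: psi_e_lt)
lemma FGl: "1 \<le> i \<Longrightarrow> i < n \<Longrightarrow> tup_of K (\<lambda>k. matE (i+1) i - matE (n+i) (n+i+1)) \<in> G"
  using FG[of i] by (simp add: psi_f_lt)

lemma U: "d + 1 \<le> n - 1 \<Longrightarrow> tup_of K (\<lambda>k. matE 1 (d+2) - matE (n+d+2) (n+1)) \<in> G"
proof (induction d)
  case 0
  have "tup_of K (\<lambda>k. matE 1 (1+1) - matE (n+1+1) (n+1)) \<in> G" using EGl[of 1] n3 by simp
  then show ?case by (simp add: numeral_eq_Suc)
next
  case (Suc d)
  have "lie_br (2*n) (tup_of K (\<lambda>k. matE 1 (d+2) - matE (n+d+2) (n+1)))
     (tup_of K (\<lambda>k. matE (d+2) (d+3) - matE (n+d+3) (n+d+2))) \<in> G"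
    using Suc EGl[of "d+2"] by (intro lie_gen.br) (auto simp: numeral_eq_Suc)
  moreover have "lie_br (2*n) (tup_of K (\<lambda>k. matE 1 (d+2) - matE (n+d+2) (n+1)))
     (tup_of K (\<lambda>k. matE (d+2) (d+3) - matE (n+d+3) (n+d+2)))
     = tup_of K (\<lambda>k. matE 1 (Suc d + 2) - matE (n + Suc d + 2) (n+1))"
    unfolding lie_br_tup using Suc.prems n3 by (auto simp: msimps numeral_eq_Suc)
  ultimately show ?case by simp
qed

lemma V: "d + 1 \<le> n - 1 \<Longrightarrow> tup_of K (\<lambda>k. matE (d+2) 1 - matE (n+1) (n+d+2)) \<in> G"
proof (induction d)
  case 0
  have "tup_of K (\<lambda>k. matE (1+1) 1 - matE (n+1) (n+1+1)) \<in> G" using FGl[of 1] n3 by simp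
  then show ?case by (simp add: numeral_eq_Suc)
next
  case (Suc d)
  have "lie_br (2*n) (tup_of K (\<lambda>k. matE (d+3) (d+2) - matE (n+d+2) (n+d+3)))
     (tup_of K (\<lambda>k. matE (d+2) 1 - matE (n+1) (n+d+2))) \<in> G"
    using Suc FGl[of "d+2"] by (intro lie_gen.br) (auto simp: numeral_eq_Suc)
  moreover have "lie_br (2*n) (tup_of K (\<lambda>k. matE (d+3) (d+2) - matE (n+d+2) (n+d+3)))
     (tup_of K (\<lambda>k. matE (d+2) 1 - matE (n+1) (n+d+2)))
     = tup_of K (\<lambda>k. matE (Suc d + 2) 1 - matE (n+1) (n + Suc d + 2))"
    unfolding lie_br_tup using Suc.prems n3 by (auto simp: msimps numeral_eq_Suc)
  ultimately show ?case by simp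
qed

lemma Wa: "tup_of K (\<lambda>k. msc (1 + inverse (a k)) (matE 1 (n+1))) \<in> G"
proof -
  have e1: "n - 2 + 2 = n" and e2: "n + (n-2) + 2 = 2*n" using n3 by auto
  have u: "tup_of K (\<lambda>k. matE 1 n - matE (2*n) (n+1)) \<in> G"
    using U[of "n-2"] n3 unfolding e1 e2 by simp
  have "lie_br (2*n) (tup_of K (\<lambda>k. matE 1 n - matE (2*n) (n+1))) (tup_of K (\<lambda>k. psi_e n (a k) n)) \<in> G"
    using u EG[of n] n3 by (intro lie_gen.br) auto
  moreover have "lie_br (2*n) (tup_of K (\<lambda>k. matE 1 n - matE (2*n) (n+1))) (tup_of K (\<lambda>k. psi_e n (a k) n))
     = tup_of K (\<lambda>k. msc (1 + inverse (a k)) (matE 1 (n+1)))"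
    unfolding lie_br_tup psi_e_n using n3 by (simp add: msimps)
  ultimately show ?thesis by simp
qed

lemma Wb: "tup_of K (\<lambda>k. msc (1 + a k) (matE (n+1) 1)) \<in> G"
proof -
  have e1: "n - 2 + 2 = n" and e2: "n + (n-2) + 2 = 2*n" using n3 by auto
  have v: "tup_of K (\<lambda>k. matE n 1 - matE (n+1) (2*n)) \<in> G"
    using V[of "n-2"] n3 unfolding e1 e2 by simp
  have "lie_br (2*n) (tup_of K (\<lambda>k. psi_f n (a k) n)) (tup_of K (\<lambda>k. matE n 1 - matE (n+1) (2*n))) \<in> G"
    using v FG[of n] n3 by (intro lie_gen.br) auto
  moreover have "lie_br (2*n) (tup_of K (\<lambda>k. psi_f n (a k) n)) (tup_of K (\<lambda>k. matE n 1 - matE (n+1) (2*n)))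
     = tup_of K (\<lambda>k. msc (1 + a k) (matE (n+1) 1))"
    unfolding lie_br_tup psi_f_n using n3 by (simp add: msimps)
  ultimately show ?thesis by simp
qed

definition "cc k = (1 + inverse (a k)) * (1 + a k)"
abbreviation "DD \<equiv> matE 1 1 - matE (n+1) (n+1)"

lemma Wt: "tup_of K (\<lambda>k. msc (cc k) DD) \<in> G"
proof -
  have "lie_br (2*n) (tup_of K (\<lambda>k. msc (1 + inverse (a k)) (matE 1 (n+1)))) (tup_of K (\<lambda>k. msc (1 + a k) (matE (n+1) 1))) \<in> G"
    using Wa Wb by (rule lie_gen.br)
  moreover have "lie_br (2*n) (tup_of K (\<lambda>k. msc (1 + inverse (a k)) (matE 1 (n+1)))) (tup_of K (\<lambda>k. msc (1 + a k) (matE (n+1) 1)))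
    = tup_of K (\<lambda>k. msc (cc k) DD)"
    unfolding lie_br_tup using n3 by (simp add: msimps msc_msc cc_def mult.commute)
  ultimately show ?thesis by simp
qed

lemma cc_inj: "inj_on (\<lambda>k. cc k * mu) {1..K}" if "mu \<noteq> 0"
proof (rule inj_onI)
  fix k j assume k: "k \<in> {1..K}" and j: "j \<in> {1..K}" and e: "cc k * mu = cc j * mu"
  then have "cc k = cc j" using that by simp
  then have "a k = a j \<or> a k = inverse (a j)"
    using c_inj[of "a k" "a j"] anz k j by (simp add: cc_def)
  then show "k = j" using adist k j by blast
qed

lemma sepgen:
  assumes g: "tup_of K gk \<in> G" and e: "\<And>k. mbr (2*n) DD (gk k) = msc mu (gk k)" and mu: "mu \<noteq> 0"
  shows "k \<in> {1..K} \<Longrightarrow> loc k (gk k) \<in> G"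
proof -
  have "\<forall>k\<in>{1..K}. loc k (gk k) \<in> G"
  proof (rule sep[where W = "tup_of K (\<lambda>k. msc (cc k) DD)" and lam = "\<lambda>k. cc k * mu"])
    show "finite {1..K}" by simp
    show "(\<Sum>k\<in>{1..K}. loc k (gk k)) \<in> G" using g by (simp add: tup_sum)
    show "tup_of K (\<lambda>k. msc (cc k) DD) \<in> G" by (rule Wt)
    show "inj_on (\<lambda>k. cc k * mu) {1..K}" using cc_inj mu .
    show "\<forall>k\<in>{1..K}. lie_br (2*n) (tup_of K (\<lambda>k. msc (cc k) DD)) (loc k (gk k)) = tsmul (cc k * mu) (loc k (gk k))"
    proof
      fix k assume k: "k \<in> {1..K}"
      then have t: "tup_of K (\<lambda>k. msc (cc k) DD) k = msc (cc k) DD" by (simp add: tup_of_def)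
      show "lie_br (2*n) (tup_of K (\<lambda>k. msc (cc k) DD)) (loc k (gk k)) = tsmul (cc k * mu) (loc k (gk k))"
        by (simp only: lie_br_loc t mbr_msc1 e msc_msc loc_msc)
    qed
  qed
  then show "k \<in> {1..K} \<Longrightarrow> loc k (gk k) \<in> G" by blast
qed

end


context ctx
begin

abbreviation "MM k \<equiv> Mset (2*n) GS k"

lemma ev_e1: "mbr (2*n) DD (psi_e n b 1) = msc 1 (psi_e n b 1)"
  using n3 by (simp add: psi_e_lt msimps)
lemma ev_en: "mbr (2*n) DD (psi_e n b n) = msc 1 (psi_e n b n)"
  using n3 by (simp add: psi_e_n msimps mult_2)
lemma ev_f1: "mbr (2*n) DD (psi_f n b 1) = msc (-1) (psi_f n b 1)"
  using n3 by (simp add: psi_f_lt msimps)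
lemma ev_fn: "mbr (2*n) DD (psi_f n b n) = msc (-1) (psi_f n b n)"
  using n3 by (simp add: psi_f_n msimps mult_2)

lemma gens_ends:
  assumes k: "k \<in> {1..K}"
  shows "psi_e n (a k) 1 \<in> MM k" "psi_e n (a k) n \<in> MM k" "psi_f n (a k) 1 \<in> MM k" "psi_f n (a k) n \<in> MM k"
proof -
  show "psi_e n (a k) 1 \<in> MM k" using sepgen[OF EG[of 1] ev_e1 _ k] n3 by (simp add: Mset_def)
  show "psi_e n (a k) n \<in> MM k" using sepgen[OF EG[of n] ev_en _ k] n3 by (simp add: Mset_def)
  show "psi_f n (a k) 1 \<in> MM k" using sepgen[OF FG[of 1] ev_f1 _ k] n3 by (simp add: Mset_def)
  show "psi_f n (a k) n \<in> MM k" using sepgen[OF FG[of n] ev_fn _ k] n3 by (simp add: Mset_def)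
qed

lemma gens_all:
  assumes k: "k \<in> {1..K}"
  shows "1 \<le> i \<Longrightarrow> i \<le> n \<Longrightarrow> psi_e n (a k) i \<in> MM k \<and> psi_f n (a k) i \<in> MM k"
proof -
  note M = msub_Mset[of "2*n" GS k]
  have mid: "d + 1 \<le> n - 1 \<Longrightarrow> psi_e n (a k) (d+1) \<in> MM k \<and> psi_f n (a k) (d+1) \<in> MM k" for d
  proof (induction d)
    case 0 then show ?case using gens_ends[OF k] by simp
  next
    case (Suc d)
    have t1: "tup_of K (\<lambda>k. psi_e n (a k) (d+2)) k = matE (d+2) (d+3) - matE (n+d+3) (n+d+2)"
      using k Suc.prems by (simp add: tup_of_def psi_e_lt numeral_eq_Suc)
    have t2: "tup_of K (\<lambda>k. psi_f n (a k) (d+1)) k = matE (d+2) (d+1) - matE (n+d+1) (n+d+2)"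
      using k Suc.prems by (simp add: tup_of_def psi_f_lt numeral_eq_Suc)
    have t3: "tup_of K (\<lambda>k. psi_f n (a k) (d+2)) k = matE (d+3) (d+2) - matE (n+d+2) (n+d+3)"
      using k Suc.prems by (simp add: tup_of_def psi_f_lt numeral_eq_Suc)
    have t4: "tup_of K (\<lambda>k. psi_e n (a k) (d+1)) k = matE (d+1) (d+2) - matE (n+d+2) (n+d+1)"
      using k Suc.prems by (simp add: tup_of_def psi_e_lt numeral_eq_Suc)
    have pe: "psi_e n (a k) (d+1) = matE (d+1) (d+2) - matE (n+d+2) (n+d+1)"
      using Suc.prems by (simp add: psi_e_lt numeral_eq_Suc)
    have pf: "psi_f n (a k) (d+1) = matE (d+2) (d+1) - matE (n+d+1) (n+d+2)"
      using Suc.prems by (simp add: psi_f_lt numeral_eq_Suc)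
    have bnd: "d + 2 \<le> n" "1 \<le> d + 2" "d + 1 \<le> n - 1" using Suc.prems by auto
    have eG: "tup_of K (\<lambda>k. psi_e n (a k) (d+2)) \<in> G" using EG[of "d+2"] bnd by simp
    have fG: "tup_of K (\<lambda>k. psi_f n (a k) (d+2)) \<in> G" using FG[of "d+2"] bnd by simp
    have eG1: "tup_of K (\<lambda>k. psi_e n (a k) (d+1)) \<in> G" using EG[of "d+1"] bnd by simp
    have fG1: "tup_of K (\<lambda>k. psi_f n (a k) (d+1)) \<in> G" using FG[of "d+1"] bnd by simp
    have IH: "psi_e n (a k) (d+1) \<in> MM k" "psi_f n (a k) (d+1) \<in> MM k" using Suc.IH bnd by auto
    have ge: "mbr (2*n) (tup_of K (\<lambda>k. psi_f n (a k) (d+1)) k)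
        (mbr (2*n) (tup_of K (\<lambda>k. psi_e n (a k) (d+2)) k) (psi_e n (a k) (d+1))) \<in> MM k"
      by (rule Mset_gen[OF fG1 Mset_gen[OF eG IH(1)]])
    have gf: "mbr (2*n) (tup_of K (\<lambda>k. psi_e n (a k) (d+1)) k)
        (mbr (2*n) (tup_of K (\<lambda>k. psi_f n (a k) (d+2)) k) (psi_f n (a k) (d+1))) \<in> MM k"
      by (rule Mset_gen[OF eG1 Mset_gen[OF fG IH(2)]])
    have pe2: "psi_e n (a k) (Suc d + 1) = matE (d+2) (d+3) - matE (n+d+3) (n+d+2)"
      using Suc.prems by (simp add: psi_e_lt numeral_eq_Suc)
    have pf2: "psi_f n (a k) (Suc d + 1) = matE (d+3) (d+2) - matE (n+d+2) (n+d+3)"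
      using Suc.prems by (simp add: psi_f_lt numeral_eq_Suc)
    have "mbr (2*n) (tup_of K (\<lambda>k. psi_f n (a k) (d+1)) k)
        (mbr (2*n) (tup_of K (\<lambda>k. psi_e n (a k) (d+2)) k) (psi_e n (a k) (d+1))) = - psi_e n (a k) (Suc d + 1)"
      unfolding t1 t2 pe pe2 using Suc.prems by (auto simp: msimps numeral_eq_Suc)
    moreover have "mbr (2*n) (tup_of K (\<lambda>k. psi_e n (a k) (d+1)) k)
        (mbr (2*n) (tup_of K (\<lambda>k. psi_f n (a k) (d+2)) k) (psi_f n (a k) (d+1))) = - psi_f n (a k) (Suc d + 1)"
      unfolding t3 t4 pf pf2 using Suc.prems by (auto simp: msimps numeral_eq_Suc)
    ultimately have "- psi_e n (a k) (Suc d + 1) \<in> MM k" "- psi_f n (a k) (Suc d + 1) \<in> MM k"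
      using ge gf by auto
    then show ?case using msub_minus[OF M] by fastforce
  qed
  assume i: "1 \<le> i" "i \<le> n"
  show "psi_e n (a k) i \<in> MM k \<and> psi_f n (a k) i \<in> MM k"
  proof (cases "i = n")
    case True then show ?thesis using gens_ends[OF k] by simp
  next
    case False then show ?thesis using mid[of "i-1"] i by simp
  qed
qed

end


lemma sg_range: "1 \<le> j \<Longrightarrow> j \<le> 2*n \<Longrightarrow> 1 \<le> sg n j \<and> sg n j \<le> 2*n"
  by (auto simp: sg_def)
lemma sg_sg: "1 \<le> j \<Longrightarrow> j \<le> 2*n \<Longrightarrow> sg n (sg n j) = j"
  by (auto simp: sg_def)
lemma sg_eq: "1 \<le> q \<Longrightarrow> q \<le> 2*n \<Longrightarrow> 1 \<le> r \<Longrightarrow> r \<le> 2*n \<Longrightarrow> (sg n q = r) = (q = sg n r)"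
  by (auto simp: sg_def)
lemma sg_inj: "1 \<le> q \<Longrightarrow> q \<le> 2*n \<Longrightarrow> 1 \<le> r \<Longrightarrow> r \<le> 2*n \<Longrightarrow> (sg n q = sg n r) = (q = r)"
  by (auto simp: sg_def)
lemma sg_bij: "bij_betw (sg n) {1..2*n} {1..2*n}"
proof (rule bij_betw_byWitness[where f' = "sg n"])
  show "\<forall>a\<in>{1..2 * n}. sg n (sg n a) = a" using sg_sg by auto
  show "\<forall>a\<in>{1..2 * n}. sg n (sg n a) = a" using sg_sg by auto
  show "sg n ` {1..2 * n} \<subseteq> {1..2 * n}" using sg_range by auto
  show "sg n ` {1..2 * n} \<subseteq> {1..2 * n}" using sg_range by auto
qed

lemma sdelta1: "finite A \<Longrightarrow> (\<Sum>i\<in>A. (f i :: complex) * (if s = i then 1 else 0)) = (if s \<in> A then f s else 0)"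
proof -
  assume A: "finite A"
  have "(\<Sum>i\<in>A. f i * (if s = i then 1 else 0)) = (\<Sum>i\<in>A. if s = i then f i else 0)" by (rule sum.cong) auto
  then show ?thesis using A by (simp add: sum.delta)
qed
lemma sdelta2: "finite A \<Longrightarrow> (\<Sum>i\<in>A. (f i :: complex) * (if i = s then 1 else 0)) = (if s \<in> A then f s else 0)"
  using sdelta1[of A f s] by (simp add: eq_commute[of _ s])

lemma expand_mat:
  assumes sup: "\<And>r s. X r s \<noteq> 0 \<Longrightarrow> r \<in> {1..N} \<and> s \<in> {1..N}"
  shows "(\<Sum>p\<in>{1..N}. \<Sum>q\<in>{1..N}. msc (X p q) (matE p q)) = X"
proof (rule ext)+
  fix r s
  have "(\<Sum>p\<in>{1..N}. \<Sum>q\<in>{1..N}. msc (X p q) (matE p q)) r s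
     = (\<Sum>p\<in>{1..N}. if p = r then (\<Sum>q\<in>{1..N}. if q = s then X r s else 0) else 0)"
    unfolding sum_app by (intro sum.cong refl) (auto simp: msc_def matE_def sdelta1 sdelta2 intro!: sum.neutral)
  also have "\<dots> = X r s" using sup[of r s] by (cases "X r s = 0") auto
  finally show "(\<Sum>p\<in>{1..N}. \<Sum>q\<in>{1..N}. msc (X p q) (matE p q)) r s = X r s" .
qed

lemma msc_sum: "(\<Sum>p\<in>A. msc (f p) Y) = msc (\<Sum>p\<in>A. f p) Y"
  by (rule ext)+ (simp add: sum_app msc_def sum_distrib_right)

lemma msc_if0: "msc c (if b then A else 0) = (if b then msc c A else 0)"
  by (simp add: msc_zero)

context ctx
begin

lemma comp_sl:
  assumes k: "k \<in> {2..K}" and sup: "\<And>r s. X r s \<noteq> 0 \<Longrightarrow> r \<in> {1..2*n} \<and> s \<in> {1..2*n}"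
    and tr: "(\<Sum>r\<in>{1..2*n}. X r r) = 0"
  shows "X \<in> MM k"
proof -
  note M = msub_Mset[of "2*n" GS k]
  have k1: "k \<in> {1..K}" and kne: "k \<noteq> 1" using k by auto
  have ak: "a k \<noteq> 0" "a k \<noteq> 1" "a k \<noteq> -1"
    using anz ane1 adist k1 kne K1 k a1 by (auto, metis atLeastAtMost_iff le_refl)
  have E: "matE p q \<in> MM k" if "1 \<le> p" "p \<le> 2*n" "1 \<le> q" "q \<le> 2*n" "p \<noteq> q" for p q
    using S1[OF M n3 ak(1) ak(2) ak(3)] gens_all[OF k1] that by blast
  define Ep where "Ep p q = (if p = q then matE p p - matE (2*n) (2*n) else matE p q)" for p q
  have Ep: "Ep p q \<in> MM k" if "1 \<le> p" "p \<le> 2*n" "1 \<le> q" "q \<le> 2*n" for p q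
  proof (cases "p = q")
    case True
    show ?thesis
    proof (cases "p = 2*n")
      case True then show ?thesis using \<open>p = q\<close> msubD(1)[OF M] by (simp add: Ep_def)
    next
      case False
      have "mbr (2*n) (matE p (2*n)) (matE (2*n) p) \<in> MM k" using E that False n3 by (intro msubD(4)[OF M]) auto
      moreover have "mbr (2*n) (matE p (2*n)) (matE (2*n) p) = Ep p q" using True that n3 by (simp add: msimps Ep_def)
      ultimately show ?thesis by simp
    qed
  next
    case False then show ?thesis using E that by (simp add: Ep_def)
  qed
  have Ep2: "Ep p q = matE p q - (if p = q then matE (2*n) (2*n) else 0)" for p q by (simp add: Ep_def)
  have "(\<Sum>p\<in>{1..2*n}. \<Sum>q\<in>{1..2*n}. msc (X p q) (Ep p q))
     = (\<Sum>p\<in>{1..2*n}. \<Sum>q\<in>{1..2*n}. msc (X p q) (matE p q))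
       - (\<Sum>p\<in>{1..2*n}. \<Sum>q\<in>{1..2*n}. msc (X p q) (if p = q then matE (2*n) (2*n) else 0))"
    by (simp add: Ep2 msc_diff sum_subtractf)
  also have "(\<Sum>p\<in>{1..2*n}. \<Sum>q\<in>{1..2*n}. msc (X p q) (if p = q then matE (2*n) (2*n) else 0))
      = (\<Sum>p\<in>{1..2*n}. msc (X p p) (matE (2*n) (2*n)))"
    by (intro sum.cong refl) (simp add: msc_if0 sum.delta)
  also have "\<dots> = 0" by (simp only: msc_sum tr msc_0)
  finally have dec: "(\<Sum>p\<in>{1..2*n}. \<Sum>q\<in>{1..2*n}. msc (X p q) (Ep p q)) = X"
    using expand_mat[OF sup] by simp
  have "(\<Sum>p\<in>{1..2*n}. \<Sum>q\<in>{1..2*n}. msc (X p q) (Ep p q)) \<in> MM k"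
    using Ep by (intro msub_sum[OF M] msubD(3)[OF M]) auto
  then show ?thesis using dec by simp
qed

lemma comp_so:
  assumes sup: "\<And>r s. X r s \<noteq> 0 \<Longrightarrow> r \<in> {1..2*n} \<and> s \<in> {1..2*n}"
    and so: "\<And>r s. r \<in> {1..2*n} \<Longrightarrow> s \<in> {1..2*n} \<Longrightarrow> X (sg n s) (sg n r) = - X r s"
  shows "X \<in> MM 1"
proof -
  note M = msub_Mset[of "2*n" GS 1]
  have k1: "1 \<in> {1..K}" using K1 by simp
  have B: "Bm n p q \<in> MM 1" if "1 \<le> p" "p \<le> 2*n" "1 \<le> q" "q \<le> 2*n" for p q
    using S2[OF M n3] gens_all[OF k1] a1 that by auto
  let ?R = "{1..2*n}"
  have "(\<Sum>p\<in>?R. \<Sum>q\<in>?R. msc (X p q) (matE (sg n q) (sg n p)))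
      = (\<Sum>p\<in>?R. \<Sum>q\<in>?R. msc (X (sg n p) (sg n q)) (matE q p))"
  proof -
    have "(\<Sum>p\<in>?R. \<Sum>q\<in>?R. msc (X p q) (matE (sg n q) (sg n p)))
        = (\<Sum>p\<in>?R. \<Sum>q\<in>?R. msc (X p (sg n q)) (matE (sg n (sg n q)) (sg n p)))"
      by (rule sum.cong[OF refl], rule sum.reindex_bij_betw[OF sg_bij, symmetric])
    also have "\<dots> = (\<Sum>p\<in>?R. \<Sum>q\<in>?R. msc (X p (sg n q)) (matE q (sg n p)))"
      by (intro sum.cong refl) (simp add: sg_sg)
    also have "\<dots> = (\<Sum>p\<in>?R. \<Sum>q\<in>?R. msc (X (sg n p) (sg n q)) (matE q (sg n (sg n p))))"
      by (rule sum.reindex_bij_betw[OF sg_bij, symmetric])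
    also have "\<dots> = (\<Sum>p\<in>?R. \<Sum>q\<in>?R. msc (X (sg n p) (sg n q)) (matE q p))"
      by (intro sum.cong refl) (simp add: sg_sg)
    finally show ?thesis .
  qed
  also have "\<dots> = (\<Sum>q\<in>?R. \<Sum>p\<in>?R. msc (X (sg n p) (sg n q)) (matE q p))"
    by (rule sum.swap)
  also have "\<dots> = (\<Sum>q\<in>?R. \<Sum>p\<in>?R. msc ((- X) q p) (matE q p))"
    by (intro sum.cong refl) (simp add: so)
  also have "\<dots> = - X"
    by (rule expand_mat) (use sup in auto)
  finally have neg: "(\<Sum>p\<in>?R. \<Sum>q\<in>?R. msc (X p q) (matE (sg n q) (sg n p))) = - X" .
  have "(\<Sum>p\<in>?R. \<Sum>q\<in>?R. msc (X p q) (Bm n p q))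
      = (\<Sum>p\<in>?R. \<Sum>q\<in>?R. msc (X p q) (matE p q)) - (\<Sum>p\<in>?R. \<Sum>q\<in>?R. msc (X p q) (matE (sg n q) (sg n p)))"
    by (simp add: Bm_def msc_diff sum_subtractf)
  also have "\<dots> = msc 2 X" using expand_mat[OF sup] neg by (rule_tac ext)+ (simp add: msc_def)
  finally have dec: "(\<Sum>p\<in>?R. \<Sum>q\<in>?R. msc (X p q) (Bm n p q)) = msc 2 X" .
  have "(\<Sum>p\<in>?R. \<Sum>q\<in>?R. msc (X p q) (Bm n p q)) \<in> MM 1"
    using B by (intro msub_sum[OF M] msubD(3)[OF M]) auto
  then show ?thesis using dec msub_msc_inv[OF M] by fastforce
qed

end


definition sup_ok :: "nat \<Rightarrow> mat \<Rightarrow> bool" where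
  "sup_ok N X \<longleftrightarrow> (\<forall>r s. X r s \<noteq> 0 \<longrightarrow> r \<in> {1..N} \<and> s \<in> {1..N})"
definition so_ok :: "nat \<Rightarrow> mat \<Rightarrow> bool" where
  "so_ok n X \<longleftrightarrow> (\<forall>r\<in>{1..2*n}. \<forall>s\<in>{1..2*n}. X (sg n s) (sg n r) = - X r s)"

lemma sup_mbr:
  assumes X: "sup_ok N X" and Y: "sup_ok N Y"
  shows "sup_ok N (mbr N X Y)"
  unfolding sup_ok_def
proof (intro allI impI)
  fix r s assume ne: "mbr N X Y r s \<noteq> 0"
  have xr: "X r l = 0" "Y r l = 0" if "r \<notin> {1..N}" for l using X Y that unfolding sup_ok_def by blast+
  have xs: "X l s = 0" "Y l s = 0" if "s \<notin> {1..N}" for l using X Y that unfolding sup_ok_def by blast+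
  show "r \<in> {1..N} \<and> s \<in> {1..N}"
  proof (rule ccontr)
    assume "\<not> (r \<in> {1..N} \<and> s \<in> {1..N})"
    then have "mbr N X Y r s = 0"
      unfolding mbr_def by (cases "r \<in> {1..N}") (simp_all add: xr xs)
    with ne show False by simp
  qed
qed

lemma trace_mbr: "(\<Sum>r\<in>{1..N}. mbr N X Y r r) = 0"
proof -
  have "(\<Sum>r\<in>{1..N}. mbr N X Y r r) = (\<Sum>r\<in>{1..N}. \<Sum>l\<in>{1..N}. X r l * Y l r) - (\<Sum>r\<in>{1..N}. \<Sum>l\<in>{1..N}. Y r l * X l r)"
    by (simp add: mbr_def sum_subtractf)
  also have "(\<Sum>r\<in>{1..N}. \<Sum>l\<in>{1..N}. Y r l * X l r) = (\<Sum>l\<in>{1..N}. \<Sum>r\<in>{1..N}. X l r * Y r l)"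
    by (subst sum.swap) (simp add: mult.commute)
  finally show ?thesis by simp
qed

lemma so_mbr:
  assumes X: "so_ok n X" and Y: "so_ok n Y"
  shows "so_ok n (mbr (2*n) X Y)"
  unfolding so_ok_def
proof (intro ballI)
  fix r s assume r: "r \<in> {1..2*n}" and s: "s \<in> {1..2*n}"
  let ?R = "{1..2*n}"
  have "mbr (2*n) X Y (sg n s) (sg n r) = (\<Sum>l\<in>?R. X (sg n s) l * Y l (sg n r) - Y (sg n s) l * X l (sg n r))"
    by (simp add: mbr_def)
  also have "\<dots> = (\<Sum>m\<in>?R. X (sg n s) (sg n m) * Y (sg n m) (sg n r) - Y (sg n s) (sg n m) * X (sg n m) (sg n r))"
    by (rule sum.reindex_bij_betw[OF sg_bij, symmetric])
  also have "\<dots> = (\<Sum>m\<in>?R. Y r m * X m s - X r m * Y m s)"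
    using X Y r s unfolding so_ok_def by (intro sum.cong refl) auto
  also have "\<dots> = - mbr (2*n) X Y r s"
    by (simp add: mbr_def sum_negf[symmetric])
  finally show "mbr (2*n) X Y (sg n s) (sg n r) = - mbr (2*n) X Y r s" .
qed

lemma Bm_so:
  assumes p: "1 \<le> p" "p \<le> 2*n" and q: "1 \<le> q" "q \<le> 2*n"
  shows "so_ok n (Bm n p q)"
  unfolding so_ok_def
proof (intro ballI)
  fix r s assume r: "r \<in> {1..2*n}" and s: "s \<in> {1..2*n}"
  have 1: "(sg n s = p) = (s = sg n p)" using sg_eq[of s n p] s p by auto
  have 2: "(sg n r = q) = (r = sg n q)" using sg_eq[of r n q] r q by auto
  have 3: "(sg n s = sg n q) = (s = q)" using sg_inj[of s n q] s q by auto
  have 4: "(sg n r = sg n p) = (r = p)" using sg_inj[of r n p] r p by auto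
  show "Bm n p q (sg n s) (sg n r) = - Bm n p q r s"
    unfolding Bm_def matE_def minus_apply 1 2 3 4 by (simp add: conj_commute)
qed

context ctx
begin

definition "Tset = {x. (\<forall>k r s. x k r s \<noteq> 0 \<longrightarrow> k \<in> {1..K} \<and> r \<in> {1..2*n} \<and> s \<in> {1..2*n})
   \<and> so_ok n (x 1) \<and> (\<forall>k\<in>{2..K}. (\<Sum>r\<in>{1..2*n}. x k r r) = 0)}"

lemma T_sub_G: "x \<in> Tset \<Longrightarrow> x \<in> G"
proof -
  assume x: "x \<in> Tset"
  have sup: "\<And>k r s. x k r s \<noteq> 0 \<Longrightarrow> k \<in> {1..K} \<and> r \<in> {1..2*n} \<and> s \<in> {1..2*n}" using x by (auto simp: Tset_def)
  have "x = tup_of K x"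
    by (rule ext)+ (use sup in \<open>auto simp: tup_of_def\<close>)
  also have "\<dots> = (\<Sum>k\<in>{1..K}. loc k (x k))" by (rule tup_sum)
  finally have xe: "x = (\<Sum>k\<in>{1..K}. loc k (x k))" .
  have "loc k (x k) \<in> G" if k: "k \<in> {1..K}" for k
  proof (cases "k = 1")
    case True
    have "x 1 \<in> MM 1"
      by (rule comp_so) (use sup x in \<open>auto simp: Tset_def so_ok_def\<close>)
    then show ?thesis using True by (simp add: Mset_def)
  next
    case False
    then have k2: "k \<in> {2..K}" using k by auto
    have "x k \<in> MM k"
      by (rule comp_sl[OF k2]) (use sup x k2 in \<open>auto simp: Tset_def\<close>)
    then show ?thesis by (simp add: Mset_def)
  qed
  then have "(\<Sum>k\<in>{1..K}. loc k (x k)) \<in> G" by (intro lie_gen_sum) auto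
  then show ?thesis using xe by simp
qed

lemma psi_e_sup: "1 \<le> i \<Longrightarrow> i \<le> n \<Longrightarrow> psi_e n b i r s \<noteq> 0 \<Longrightarrow> r \<in> {1..2*n} \<and> s \<in> {1..2*n}"
  by (auto simp: psi_e_def matE_def split: if_splits)
lemma psi_f_sup: "1 \<le> i \<Longrightarrow> i \<le> n \<Longrightarrow> psi_f n b i r s \<noteq> 0 \<Longrightarrow> r \<in> {1..2*n} \<and> s \<in> {1..2*n}"
  by (auto simp: psi_f_def matE_def split: if_splits)
lemma psi_e_diag: "psi_e n b i r r = 0"
  using n3 by (auto simp: psi_e_def matE_def)
lemma psi_f_diag: "psi_f n b i r r = 0"
  using n3 by (auto simp: psi_f_def matE_def)

lemma psi_e_so: "1 \<le> i \<Longrightarrow> i \<le> n \<Longrightarrow> so_ok n (psi_e n (-1) i)"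
proof -
  assume i: "1 \<le> i" "i \<le> n"
  show ?thesis
  proof (cases "i < n")
    case True
    then have "psi_e n (-1) i = Bm n i (i+1)" by (simp add: psi_e_lt Bm_def sg_def add.commute)
    then show ?thesis using Bm_so[of i n "i+1"] i True by simp
  next
    case False
    then have "i = n" using i by simp
    then have "psi_e n (-1) i = Bm n n (n+1)" by (simp add: psi_e_n Bm_def sg_def msimps mult_2)
    then show ?thesis using Bm_so[of n n "n+1"] i \<open>i = n\<close> by simp
  qed
qed

lemma psi_f_so: "1 \<le> i \<Longrightarrow> i \<le> n \<Longrightarrow> so_ok n (psi_f n (-1) i)"
proof -
  assume i: "1 \<le> i" "i \<le> n"
  show ?thesis
  proof (cases "i < n")
    case True
    then have "psi_f n (-1) i = Bm n (i+1) i" by (simp add: psi_f_lt Bm_def sg_def add.commute)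
    then show ?thesis using Bm_so[of "i+1" n i] i True by simp
  next
    case False
    then have "i = n" using i by simp
    then have "psi_f n (-1) i = Bm n (n+1) n" by (simp add: psi_f_n Bm_def sg_def msimps mult_2)
    then show ?thesis using Bm_so[of "n+1" n n] i \<open>i = n\<close> by simp
  qed
qed

lemma T_br: "x \<in> Tset \<Longrightarrow> y \<in> Tset \<Longrightarrow> lie_br (2*n) x y \<in> Tset"
proof -
  assume x: "x \<in> Tset" and y: "y \<in> Tset"
  have sx: "sup_ok (2*n) (x k)" "sup_ok (2*n) (y k)" for k using x y by (auto simp: Tset_def sup_ok_def)
  have kx0: "x k r s = 0" "y k r s = 0" if "k \<notin> {1..K}" for k r s
    using x y that unfolding Tset_def by blast+
  have kx: "x k = 0" "y k = 0" if "k \<notin> {1..K}" for k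
    using kx0[OF that] by (auto simp: fun_eq_iff)
  have "lie_br (2*n) x y k r s \<noteq> 0 \<Longrightarrow> k \<in> {1..K} \<and> r \<in> {1..2*n} \<and> s \<in> {1..2*n}" for k r s
  proof -
    assume ne: "lie_br (2*n) x y k r s \<noteq> 0"
    have "k \<in> {1..K}" using ne kx[of k] by (cases "k \<in> {1..K}") (auto simp: lie_br_mbr mbr_zero1)
    moreover have "sup_ok (2*n) (mbr (2*n) (x k) (y k))" using sup_mbr sx by blast
    ultimately show ?thesis using ne by (auto simp: lie_br_mbr sup_ok_def)
  qed
  moreover have "so_ok n (lie_br (2*n) x y 1)" using x y so_mbr by (simp add: lie_br_mbr Tset_def)
  moreover have "\<forall>k\<in>{2..K}. (\<Sum>r\<in>{1..2*n}. lie_br (2*n) x y k r r) = 0"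
    using trace_mbr[of "2*n" "x _" "y _"] by (simp add: lie_br_mbr)
  ultimately show ?thesis by (simp add: Tset_def)
qed

lemma T_tup:
  assumes sup: "\<And>k r s. k \<in> {1..K} \<Longrightarrow> g k r s \<noteq> 0 \<Longrightarrow> r \<in> {1..2*n} \<and> s \<in> {1..2*n}"
    and so: "so_ok n (g 1)" and tr: "\<And>k r. g k r r = 0"
  shows "tup_of K g \<in> Tset"
proof -
  have "tup_of K g k r s \<noteq> 0 \<Longrightarrow> k \<in> {1..K} \<and> r \<in> {1..2*n} \<and> s \<in> {1..2*n}" for k r s
  proof -
    assume ne: "tup_of K g k r s \<noteq> 0"
    then have k: "k \<in> {1..K}" by (simp add: tup_of_def split: if_splits)
    then have "g k r s \<noteq> 0" using ne by (simp add: tup_of_def)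
    then show ?thesis using sup k by blast
  qed
  moreover have "tup_of K g 1 = g 1" using K1 by (simp add: tup_of_def)
  moreover have "(\<Sum>r\<in>{1..2*n}. tup_of K g k r r) = 0" for k by (cases "1 \<le> k \<and> k \<le> K") (auto simp: tup_of_def tr)
  ultimately show ?thesis using so by (simp add: Tset_def)
qed

lemma T_gen_e: "1 \<le> i \<Longrightarrow> i \<le> n \<Longrightarrow> tup_of K (\<lambda>k. psi_e n (a k) i) \<in> Tset"
proof (rule T_tup)
  fix k r s assume "1 \<le> i" "i \<le> n" "psi_e n (a k) i r s \<noteq> 0"
  then show "r \<in> {1..2*n} \<and> s \<in> {1..2*n}" by (rule psi_e_sup)
next
  assume "1 \<le> i" "i \<le> n"
  then show "so_ok n (psi_e n (a 1) i)" unfolding a1 by (rule psi_e_so)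
next
  show "psi_e n (a k) i r r = 0" for k r by (rule psi_e_diag)
qed

lemma T_gen_f: "1 \<le> i \<Longrightarrow> i \<le> n \<Longrightarrow> tup_of K (\<lambda>k. psi_f n (a k) i) \<in> Tset"
proof (rule T_tup)
  fix k r s assume "1 \<le> i" "i \<le> n" "psi_f n (a k) i r s \<noteq> 0"
  then show "r \<in> {1..2*n} \<and> s \<in> {1..2*n}" by (rule psi_f_sup)
next
  assume "1 \<le> i" "i \<le> n"
  then show "so_ok n (psi_f n (a 1) i)" unfolding a1 by (rule psi_f_so)
next
  show "psi_f n (a k) i r r = 0" for k r by (rule psi_f_diag)
qed

lemma T_add: "x \<in> Tset \<Longrightarrow> y \<in> Tset \<Longrightarrow> tadd x y \<in> Tset"
proof -
  assume x: "x \<in> Tset" and y: "y \<in> Tset"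
  have "tadd x y k r s \<noteq> 0 \<Longrightarrow> k \<in> {1..K} \<and> r \<in> {1..2*n} \<and> s \<in> {1..2*n}" for k r s
  proof -
    assume "tadd x y k r s \<noteq> 0"
    then have "x k r s \<noteq> 0 \<or> y k r s \<noteq> 0" by (auto simp: tadd_def)
    then show ?thesis using x y unfolding Tset_def by blast
  qed
  moreover have "so_ok n (tadd x y 1)" using x y by (simp add: Tset_def so_ok_def tadd_def)
  moreover have "\<forall>k\<in>{2..K}. (\<Sum>r\<in>{1..2*n}. tadd x y k r r) = 0"
    using x y by (simp add: Tset_def tadd_def sum.distrib)
  ultimately show ?thesis by (simp add: Tset_def)
qed

lemma G_sub_T: "x \<in> G \<Longrightarrow> x \<in> Tset"
proof (induction rule: lie_gen.induct)
  case (gen x)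
  then consider i where "i \<in> {1..n}" "x = psiA_e n K a i" | i where "i \<in> {1..n}" "x = psiA_f n K a i"
    | i where "i \<in> {1..n}" "x = lie_br (2*n) (psiA_e n K a i) (psiA_f n K a i)"
    unfolding GS_def by blast
  then show ?case
  proof cases
    case 1 then show ?thesis using T_gen_e by (simp add: psiA_e_def)
  next
    case 2 then show ?thesis using T_gen_f by (simp add: psiA_f_def)
  next
    case 3 then show ?thesis using T_gen_e T_gen_f T_br by (simp add: psiA_e_def psiA_f_def)
  qed
next
  case zero
  then show ?case by (simp add: Tset_def so_ok_def)
next
  case (add x y)
  then show ?case using T_add by blast
next
  case (smul x c)
  then show ?case by (auto simp: Tset_def so_ok_def tsmul_def sum_distrib_left[symmetric])
next
  case (br x y)
  then show ?case using T_br by blast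
qed

lemma G_eq_T: "G = Tset" using G_sub_T T_sub_G by blast

end


definition mm :: "nat \<Rightarrow> mat \<Rightarrow> mat \<Rightarrow> mat" where
  "mm N X Y = (\<lambda>r s. \<Sum>l\<in>{1..N}. X r l * Y l s)"

definition rho :: "nat \<Rightarrow> nat \<Rightarrow> nat" where "rho n r = (if r \<le> n then r else r - n)"

definition pv :: "bool \<Rightarrow> bool \<Rightarrow> complex" where
  "pv b c = (if b then (if c then 1 else \<i>) else (if c then 1 else - \<i>))"
definition qv :: "bool \<Rightarrow> bool \<Rightarrow> complex" where
  "qv b c = (if b then 1/2 else (if c then - \<i>/2 else \<i>/2))"

definition Pm :: "nat \<Rightarrow> mat" where
  "Pm n r s = (if r \<in> {1..2*n} \<and> s \<in> {1..2*n} \<and> rho n r = rho n s then pv (r \<le> n) (s \<le> n) else 0)"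
definition Qm :: "nat \<Rightarrow> mat" where
  "Qm n r s = (if r \<in> {1..2*n} \<and> s \<in> {1..2*n} \<and> rho n r = rho n s then qv (r \<le> n) (s \<le> n) else 0)"

definition Idm :: "nat \<Rightarrow> mat" where "Idm N r s = (if r = s \<and> r \<in> {1..N} then 1 else 0)"

lemma sum_two:
  fixes u n :: nat
  assumes u: "1 \<le> u" "u \<le> n" and z: "\<And>l. l \<in> {1..2*n} \<Longrightarrow> l \<noteq> u \<Longrightarrow> l \<noteq> u + n \<Longrightarrow> g l = 0"
  shows "(\<Sum>l\<in>{1..2*n}. g l) = g u + g (u + n)"
proof -
  have "(\<Sum>l\<in>{1..2*n}. g l) = (\<Sum>l\<in>{u, u+n}. g l)"
    by (rule sum.mono_neutral_right) (use u z in auto)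
  also have "\<dots> = g u + g (u+n)" using u by simp
  finally show ?thesis .
qed

lemma range_cases:
  fixes r n :: nat
  assumes "1 \<le> r" "r \<le> 2*n"
  obtains u where "1 \<le> u" "u \<le> n" "r = u" | u where "1 \<le> u" "u \<le> n" "r = u + n"
proof (cases "r \<le> n")
  case True then show ?thesis using that assms by blast
next
  case False then show ?thesis using that(2)[of "r - n"] assms by auto
qed

context
  fixes n :: nat and u :: nat
  assumes u: "1 \<le> u" "u \<le> n"
begin

lemma P_row1: "l \<in> {1..2*n} \<Longrightarrow> l \<noteq> u \<Longrightarrow> l \<noteq> u + n \<Longrightarrow> Pm n u l = 0"
  using u by (auto simp: Pm_def rho_def)
lemma P_row2: "l \<in> {1..2*n} \<Longrightarrow> l \<noteq> u \<Longrightarrow> l \<noteq> u + n \<Longrightarrow> Pm n (u+n) l = 0"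
  using u by (auto simp: Pm_def rho_def)
lemma P_col1: "l \<in> {1..2*n} \<Longrightarrow> l \<noteq> u \<Longrightarrow> l \<noteq> u + n \<Longrightarrow> Pm n l u = 0"
  using u by (auto simp: Pm_def rho_def)
lemma P_col2: "l \<in> {1..2*n} \<Longrightarrow> l \<noteq> u \<Longrightarrow> l \<noteq> u + n \<Longrightarrow> Pm n l (u+n) = 0"
  using u by (auto simp: Pm_def rho_def)
lemma Q_row1: "l \<in> {1..2*n} \<Longrightarrow> l \<noteq> u \<Longrightarrow> l \<noteq> u + n \<Longrightarrow> Qm n u l = 0"
  using u by (auto simp: Qm_def rho_def)
lemma Q_row2: "l \<in> {1..2*n} \<Longrightarrow> l \<noteq> u \<Longrightarrow> l \<noteq> u + n \<Longrightarrow> Qm n (u+n) l = 0"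
  using u by (auto simp: Qm_def rho_def)
lemma Q_col1: "l \<in> {1..2*n} \<Longrightarrow> l \<noteq> u \<Longrightarrow> l \<noteq> u + n \<Longrightarrow> Qm n l u = 0"
  using u by (auto simp: Qm_def rho_def)
lemma Q_col2: "l \<in> {1..2*n} \<Longrightarrow> l \<noteq> u \<Longrightarrow> l \<noteq> u + n \<Longrightarrow> Qm n l (u+n) = 0"
  using u by (auto simp: Qm_def rho_def)

lemma P_vals: "Pm n u u = 1" "Pm n u (u+n) = \<i>" "Pm n (u+n) u = 1" "Pm n (u+n) (u+n) = - \<i>"
  using u by (auto simp: Pm_def rho_def pv_def)
lemma Q_vals: "Qm n u u = 1/2" "Qm n u (u+n) = 1/2" "Qm n (u+n) u = - \<i>/2" "Qm n (u+n) (u+n) = \<i>/2"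
  using u by (auto simp: Qm_def rho_def qv_def)

lemma mm_P_right1: "mm (2*n) Z (Pm n) l u = Z l u + Z l (u+n)"
  unfolding mm_def by (subst sum_two[OF u]) (auto simp: P_col1 P_vals)
lemma mm_P_right2: "mm (2*n) Z (Pm n) l (u+n) = \<i> * Z l u - \<i> * Z l (u+n)"
  unfolding mm_def by (subst sum_two[OF u]) (auto simp: P_col2 P_vals)
lemma mm_Q_left1: "mm (2*n) (Qm n) Z u s = Z u s / 2 + Z (u+n) s / 2"
  unfolding mm_def by (subst sum_two[OF u]) (auto simp: Q_row1 Q_vals)
lemma mm_Q_left2: "mm (2*n) (Qm n) Z (u+n) s = - \<i> * Z u s / 2 + \<i> * Z (u+n) s / 2"
  unfolding mm_def by (subst sum_two[OF u]) (auto simp: Q_row2 Q_vals)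
lemma mm_P_left1: "mm (2*n) (Pm n) Z u s = Z u s + \<i> * Z (u+n) s"
  unfolding mm_def by (subst sum_two[OF u]) (auto simp: P_row1 P_vals)
lemma mm_P_left2: "mm (2*n) (Pm n) Z (u+n) s = Z u s - \<i> * Z (u+n) s"
  unfolding mm_def by (subst sum_two[OF u]) (auto simp: P_row2 P_vals)
lemma mm_Q_right1: "mm (2*n) Z (Qm n) l u = Z l u / 2 - \<i> * Z l (u+n) / 2"
  unfolding mm_def by (subst sum_two[OF u]) (auto simp: Q_col1 Q_vals)
lemma mm_Q_right2: "mm (2*n) Z (Qm n) l (u+n) = Z l u / 2 + \<i> * Z l (u+n) / 2"
  unfolding mm_def by (subst sum_two[OF u]) (auto simp: Q_col2 Q_vals)

end


lemma P_out: "r \<notin> {1..2*n} \<or> s \<notin> {1..2*n} \<Longrightarrow> Pm n r s = 0" by (auto simp: Pm_def)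
lemma Q_out: "r \<notin> {1..2*n} \<or> s \<notin> {1..2*n} \<Longrightarrow> Qm n r s = 0" by (auto simp: Qm_def)

lemma mm_out_left: "(\<And>l. X r l = 0) \<Longrightarrow> mm N X Y r s = 0" by (simp add: mm_def)
lemma mm_out_right: "(\<And>l. Y l s = 0) \<Longrightarrow> mm N X Y r s = 0" by (simp add: mm_def)

lemma sg_u: "u \<le> n \<Longrightarrow> sg n u = u + n" by (simp add: sg_def)
lemma sg_un: "1 \<le> u \<Longrightarrow> sg n (u + n) = u" by (simp add: sg_def)

definition phi1 :: "nat \<Rightarrow> mat \<Rightarrow> mat" where "phi1 n X = mm (2*n) (Qm n) (mm (2*n) X (Pm n))"
definition psi1 :: "nat \<Rightarrow> mat \<Rightarrow> mat" where "psi1 n Y = mm (2*n) (Pm n) (mm (2*n) Y (Qm n))"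

lemma phi1_out: "r \<notin> {1..2*n} \<or> s \<notin> {1..2*n} \<Longrightarrow> phi1 n X r s = 0"
  unfolding phi1_def
  by (auto intro!: mm_out_left mm_out_right simp: Q_out P_out mm_def)
lemma psi1_out: "r \<notin> {1..2*n} \<or> s \<notin> {1..2*n} \<Longrightarrow> psi1 n X r s = 0"
  unfolding psi1_def
  by (auto intro!: mm_out_left mm_out_right simp: Q_out P_out mm_def)

lemma phi1_skew:
  assumes so: "so_ok n X"
  shows "phi1 n X s r = - phi1 n X r s"
proof (cases "r \<in> {1..2*n} \<and> s \<in> {1..2*n}")
  case False then show ?thesis using phi1_out by auto
next
  case True
  then have r: "1 \<le> r" "r \<le> 2*n" and s: "1 \<le> s" "s \<le> 2*n" by auto
  have rel: "X v u = - X (u+n) (v+n)" "X v (u+n) = - X u (v+n)" "X (v+n) u = - X (u+n) v" "X (v+n) (u+n) = - X u v"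
    if "1 \<le> u" "u \<le> n" "1 \<le> v" "v \<le> n" for u v
  proof -
    have R: "u \<in> {1..2*n}" "v \<in> {1..2*n}" "u + n \<in> {1..2*n}" "v + n \<in> {1..2*n}" using that by auto
    show "X v u = - X (u+n) (v+n)" using so R(3,4) that unfolding so_ok_def by (metis sg_un)
    show "X v (u+n) = - X u (v+n)" using so R(1,4) that unfolding so_ok_def by (metis sg_un sg_u)
    show "X (v+n) u = - X (u+n) v" using so R(3,2) that unfolding so_ok_def by (metis sg_un sg_u)
    show "X (v+n) (u+n) = - X u v" using so R(1,2) that unfolding so_ok_def by (metis sg_u)
  qed
  show ?thesis
  proof (cases rule: range_cases[OF r])
    case (1 u)
    show ?thesis
    proof (cases rule: range_cases[OF s])
      case (1 v)
      then show ?thesis using \<open>1 \<le> u\<close> \<open>u \<le> n\<close> \<open>r = u\<close> rel[of u v]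
        by (simp add: phi1_def mm_Q_left1 mm_Q_left2 mm_P_right1 mm_P_right2) (simp add: field_simps)
    next
      case (2 v)
      then show ?thesis using \<open>1 \<le> u\<close> \<open>u \<le> n\<close> \<open>r = u\<close> rel[of u v]
        by (simp add: phi1_def mm_Q_left1 mm_Q_left2 mm_P_right1 mm_P_right2) (simp add: field_simps)
    qed
  next
    case (2 u)
    show ?thesis
    proof (cases rule: range_cases[OF s])
      case (1 v)
      then show ?thesis using \<open>1 \<le> u\<close> \<open>u \<le> n\<close> \<open>r = u + n\<close> rel[of u v]
        by (simp add: phi1_def mm_Q_left1 mm_Q_left2 mm_P_right1 mm_P_right2) (simp add: field_simps)
    next
      case (2 v)
      then show ?thesis using \<open>1 \<le> u\<close> \<open>u \<le> n\<close> \<open>r = u + n\<close> rel[of u v]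
        by (simp add: phi1_def mm_Q_left1 mm_Q_left2 mm_P_right1 mm_P_right2) (simp add: field_simps)
    qed
  qed
qed


lemma psi1_so:
  assumes sk: "\<And>r s. Y s r = - Y r s"
  shows "so_ok n (psi1 n Y)"
  unfolding so_ok_def
proof (intro ballI)
  fix r s assume rr: "r \<in> {1..2*n}" and ss: "s \<in> {1..2*n}"
  then have r: "1 \<le> r" "r \<le> 2*n" and s: "1 \<le> s" "s \<le> 2*n" by auto
  have rel: "Y v u = - Y u v" "Y v (u+n) = - Y (u+n) v" "Y (v+n) u = - Y u (v+n)" "Y (v+n) (u+n) = - Y (u+n) (v+n)"
    for u v by (rule sk)+
  show "psi1 n Y (sg n s) (sg n r) = - psi1 n Y r s"
  proof (cases rule: range_cases[OF r])
    case (1 u)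
    show ?thesis
    proof (cases rule: range_cases[OF s])
      case (1 v)
      then show ?thesis using \<open>1 \<le> u\<close> \<open>u \<le> n\<close> \<open>r = u\<close> rel[of u v]
        by (simp add: sg_u sg_un psi1_def mm_P_left1 mm_P_left2 mm_Q_right1 mm_Q_right2) (simp add: field_simps)
    next
      case (2 v)
      then show ?thesis using \<open>1 \<le> u\<close> \<open>u \<le> n\<close> \<open>r = u\<close> rel[of u v]
        by (simp add: sg_u sg_un psi1_def mm_P_left1 mm_P_left2 mm_Q_right1 mm_Q_right2) (simp add: field_simps)
    qed
  next
    case (2 u)
    show ?thesis
    proof (cases rule: range_cases[OF s])
      case (1 v)
      then show ?thesis using \<open>1 \<le> u\<close> \<open>u \<le> n\<close> \<open>r = u + n\<close> rel[of u v]
        by (simp add: sg_u sg_un psi1_def mm_P_left1 mm_P_left2 mm_Q_right1 mm_Q_right2) (simp add: field_simps)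
    next
      case (2 v)
      then show ?thesis using \<open>1 \<le> u\<close> \<open>u \<le> n\<close> \<open>r = u + n\<close> rel[of u v]
        by (simp add: sg_u sg_un psi1_def mm_P_left1 mm_P_left2 mm_Q_right1 mm_Q_right2) (simp add: field_simps)
    qed
  qed
qed

lemma P_uv: "1 \<le> u \<Longrightarrow> u \<le> n \<Longrightarrow> 1 \<le> v \<Longrightarrow> v \<le> n \<Longrightarrow>
   Pm n u v = (if u = v then 1 else 0) \<and> Pm n u (v+n) = (if u = v then \<i> else 0) \<and>
   Pm n (u+n) v = (if u = v then 1 else 0) \<and> Pm n (u+n) (v+n) = (if u = v then - \<i> else 0)"
  by (auto simp: Pm_def rho_def pv_def)
lemma Q_uv: "1 \<le> u \<Longrightarrow> u \<le> n \<Longrightarrow> 1 \<le> v \<Longrightarrow> v \<le> n \<Longrightarrow>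
   Qm n u v = (if u = v then 1/2 else 0) \<and> Qm n u (v+n) = (if u = v then 1/2 else 0) \<and>
   Qm n (u+n) v = (if u = v then - \<i>/2 else 0) \<and> Qm n (u+n) (v+n) = (if u = v then \<i>/2 else 0)"
  by (auto simp: Qm_def rho_def qv_def)

lemma QP: "mm (2*n) (Qm n) (Pm n) = Idm (2*n)"
proof (rule ext)+
  fix r s
  show "mm (2*n) (Qm n) (Pm n) r s = Idm (2*n) r s"
  proof (cases "r \<in> {1..2*n} \<and> s \<in> {1..2*n}")
    case False
    then consider "r \<notin> {1..2*n}" | "s \<notin> {1..2*n}" by blast
    then show ?thesis
    proof cases
      case 1 then show ?thesis by (simp add: Idm_def mm_out_left Q_out)
    next
      case 2 then show ?thesis by (simp add: Idm_def mm_out_right P_out)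
    qed
  next
    case True
    then have r: "1 \<le> r" "r \<le> 2*n" and s: "1 \<le> s" "s \<le> 2*n" by auto
    show ?thesis
    proof (cases rule: range_cases[OF r])
      case (1 u)
      then show ?thesis
      proof (cases rule: range_cases[OF s])
        case (1 v) with \<open>1 \<le> u\<close> \<open>u \<le> n\<close> \<open>r = u\<close> show ?thesis
          using P_uv[of u n v] by (simp add: mm_Q_left1 Idm_def)
      next
        case (2 v) with \<open>1 \<le> u\<close> \<open>u \<le> n\<close> \<open>r = u\<close> show ?thesis
          using P_uv[of u n v] by (simp add: mm_Q_left1 Idm_def)
      qed
    next
      case (2 u)
      then show ?thesis
      proof (cases rule: range_cases[OF s])
        case (1 v) with \<open>1 \<le> u\<close> \<open>u \<le> n\<close> \<open>r = u + n\<close> show ?thesis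
          using P_uv[of u n v] by (simp add: mm_Q_left2 Idm_def)
      next
        case (2 v) with \<open>1 \<le> u\<close> \<open>u \<le> n\<close> \<open>r = u + n\<close> show ?thesis
          using P_uv[of u n v] by (simp add: mm_Q_left2 Idm_def)
      qed
    qed
  qed
qed

lemma PQ: "mm (2*n) (Pm n) (Qm n) = Idm (2*n)"
proof (rule ext)+
  fix r s
  show "mm (2*n) (Pm n) (Qm n) r s = Idm (2*n) r s"
  proof (cases "r \<in> {1..2*n} \<and> s \<in> {1..2*n}")
    case False
    then consider "r \<notin> {1..2*n}" | "s \<notin> {1..2*n}" by blast
    then show ?thesis
    proof cases
      case 1 then show ?thesis by (simp add: Idm_def mm_out_left P_out)
    next
      case 2 then show ?thesis by (simp add: Idm_def mm_out_right Q_out)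
    qed
  next
    case True
    then have r: "1 \<le> r" "r \<le> 2*n" and s: "1 \<le> s" "s \<le> 2*n" by auto
    show ?thesis
    proof (cases rule: range_cases[OF r])
      case (1 u)
      then show ?thesis
      proof (cases rule: range_cases[OF s])
        case (1 v) with \<open>1 \<le> u\<close> \<open>u \<le> n\<close> \<open>r = u\<close> show ?thesis
          using Q_uv[of u n v] by (simp add: mm_P_left1 Idm_def)
      next
        case (2 v) with \<open>1 \<le> u\<close> \<open>u \<le> n\<close> \<open>r = u\<close> show ?thesis
          using Q_uv[of u n v] by (simp add: mm_P_left1 Idm_def)
      qed
    next
      case (2 u)
      then show ?thesis
      proof (cases rule: range_cases[OF s])
        case (1 v) with \<open>1 \<le> u\<close> \<open>u \<le> n\<close> \<open>r = u + n\<close> show ?thesis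
          using Q_uv[of u n v] by (simp add: mm_P_left2 Idm_def)
      next
        case (2 v) with \<open>1 \<le> u\<close> \<open>u \<le> n\<close> \<open>r = u + n\<close> show ?thesis
          using Q_uv[of u n v] by (simp add: mm_P_left2 Idm_def)
      qed
    qed
  qed
qed

lemma mm_assoc: "mm N (mm N X Y) Z = mm N X (mm N Y Z)"
proof (rule ext)+
  fix r s
  have "mm N (mm N X Y) Z r s = (\<Sum>l\<in>{1..N}. \<Sum>m\<in>{1..N}. X r m * Y m l * Z l s)"
    by (simp add: mm_def sum_distrib_right)
  also have "\<dots> = (\<Sum>m\<in>{1..N}. \<Sum>l\<in>{1..N}. X r m * Y m l * Z l s)" by (rule sum.swap)
  also have "\<dots> = mm N X (mm N Y Z) r s" by (simp add: mm_def sum_distrib_left mult.assoc)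
  finally show "mm N (mm N X Y) Z r s = mm N X (mm N Y Z) r s" .
qed

lemma Id_left: "sup_ok N X \<Longrightarrow> mm N (Idm N) X = X"
proof (rule ext)+
  fix r s assume X: "sup_ok N X"
  have "mm N (Idm N) X r s = (\<Sum>l\<in>{1..N}. if l = r then (if r \<in> {1..N} then X r s else 0) else 0)"
    unfolding mm_def by (rule sum.cong) (auto simp: Idm_def)
  also have "\<dots> = X r s" using X by (auto simp: sup_ok_def)
  finally show "mm N (Idm N) X r s = X r s" .
qed

lemma Id_right: "sup_ok N X \<Longrightarrow> mm N X (Idm N) = X"
proof (rule ext)+
  fix r s assume X: "sup_ok N X"
  have "mm N X (Idm N) r s = (\<Sum>l\<in>{1..N}. if l = s then (if s \<in> {1..N} then X r s else 0) else 0)"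
    unfolding mm_def by (rule sum.cong) (auto simp: Idm_def)
  also have "\<dots> = X r s" using X by (auto simp: sup_ok_def)
  finally show "mm N X (Idm N) r s = X r s" .
qed

lemma mbr_mm: "mbr N X Y = mm N X Y - mm N Y X"
  by (rule ext)+ (simp add: mbr_def mm_def sum_subtractf)

lemma mm_diff1: "mm N (X - Y) Z = mm N X Z - mm N Y Z"
  by (rule ext)+ (simp add: mm_def sum_subtractf left_diff_distrib)
lemma mm_diff2: "mm N Z (X - Y) = mm N Z X - mm N Z Y"
  by (rule ext)+ (simp add: mm_def sum_subtractf right_diff_distrib)
lemma mm_add1: "mm N (X + Y) Z = mm N X Z + mm N Y Z"
  by (rule ext)+ (simp add: mm_def sum.distrib distrib_right)
lemma mm_add2: "mm N Z (X + Y) = mm N Z X + mm N Z Y"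
  by (rule ext)+ (simp add: mm_def sum.distrib distrib_left)
lemma mm_msc1: "mm N (msc c X) Z = msc c (mm N X Z)"
  by (rule ext)+ (simp add: mm_def msc_def sum_distrib_left mult.assoc)
lemma mm_msc2: "mm N Z (msc c X) = msc c (mm N Z X)"
  by (rule ext)+ (simp add: mm_def msc_def sum_distrib_left algebra_simps)

lemma sup_mmP:
  assumes Y: "sup_ok (2*n) Y"
  shows "sup_ok (2*n) (mm (2*n) Y (Pm n))"
  unfolding sup_ok_def
proof (intro allI impI)
  fix r s assume ne: "mm (2*n) Y (Pm n) r s \<noteq> 0"
  show "r \<in> {1..2*n} \<and> s \<in> {1..2*n}"
  proof (rule ccontr)
    assume c: "\<not> (r \<in> {1..2*n} \<and> s \<in> {1..2*n})"
    have "mm (2*n) Y (Pm n) r s = 0"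
    proof (cases "r \<in> {1..2*n}")
      case True then have "s \<notin> {1..2*n}" using c by blast
      then show ?thesis by (intro mm_out_right) (simp add: P_out)
    next
      case False then show ?thesis using Y by (intro mm_out_left) (auto simp: sup_ok_def)
    qed
    with ne show False by simp
  qed
qed

lemma phi1_mbr:
  assumes X: "sup_ok (2*n) X" and Y: "sup_ok (2*n) Y"
  shows "phi1 n (mbr (2*n) X Y) = mbr (2*n) (phi1 n X) (phi1 n Y)"
proof -
  have key: "mm (2*n) (phi1 n A) (phi1 n B) = phi1 n (mm (2*n) A B)" if B: "sup_ok (2*n) B" for A B
  proof -
    have "mm (2*n) (phi1 n A) (phi1 n B)
        = mm (2*n) (Qm n) (mm (2*n) A (mm (2*n) (mm (2*n) (Pm n) (Qm n)) (mm (2*n) B (Pm n))))"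
      by (simp add: phi1_def mm_assoc)
    also have "\<dots> = mm (2*n) (Qm n) (mm (2*n) A (mm (2*n) B (Pm n)))"
      by (simp add: PQ Id_left sup_mmP[OF B])
    also have "\<dots> = phi1 n (mm (2*n) A B)" by (simp add: phi1_def mm_assoc)
    finally show ?thesis .
  qed
  show ?thesis
    unfolding mbr_mm key[OF Y] key[OF X] by (simp add: phi1_def mm_diff1 mm_diff2)
qed


lemma sup_mm: "sup_ok N X \<Longrightarrow> sup_ok N Y \<Longrightarrow> sup_ok N (mm N X Y)"
  unfolding sup_ok_def mm_def
proof (intro allI impI)
  fix r s assume X: "\<forall>r s. X r s \<noteq> 0 \<longrightarrow> r \<in> {1..N} \<and> s \<in> {1..N}"
    and Y: "\<forall>r s. Y r s \<noteq> 0 \<longrightarrow> r \<in> {1..N} \<and> s \<in> {1..N}"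
    and ne: "(\<Sum>l\<in>{1..N}. X r l * Y l s) \<noteq> 0"
  then obtain l where "X r l * Y l s \<noteq> 0" using sum.not_neutral_contains_not_neutral by blast
  then show "r \<in> {1..N} \<and> s \<in> {1..N}" using X Y by auto
qed

lemma sup_P: "sup_ok (2*n) (Pm n)" by (auto simp: sup_ok_def Pm_def)
lemma sup_Q: "sup_ok (2*n) (Qm n)" by (auto simp: sup_ok_def Qm_def)

lemma psi_phi: "sup_ok (2*n) X \<Longrightarrow> psi1 n (phi1 n X) = X"
proof -
  assume X: "sup_ok (2*n) X"
  have s: "sup_ok (2*n) (mm (2*n) (mm (2*n) X (Pm n)) (Qm n))" using X sup_P sup_Q sup_mm by blast
  have "psi1 n (phi1 n X) = mm (2*n) (mm (2*n) (Pm n) (Qm n)) (mm (2*n) (mm (2*n) X (Pm n)) (Qm n))"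
    by (simp add: psi1_def phi1_def mm_assoc)
  also have "\<dots> = mm (2*n) X (mm (2*n) (Pm n) (Qm n))" using s by (simp add: PQ Id_left mm_assoc)
  also have "\<dots> = X" using X by (simp add: PQ Id_right)
  finally show ?thesis .
qed

lemma phi_psi: "sup_ok (2*n) X \<Longrightarrow> phi1 n (psi1 n X) = X"
proof -
  assume X: "sup_ok (2*n) X"
  have s: "sup_ok (2*n) (mm (2*n) (mm (2*n) X (Qm n)) (Pm n))" using X sup_P sup_Q sup_mm by blast
  have "phi1 n (psi1 n X) = mm (2*n) (mm (2*n) (Qm n) (Pm n)) (mm (2*n) (mm (2*n) X (Qm n)) (Pm n))"
    by (simp add: psi1_def phi1_def mm_assoc)
  also have "\<dots> = mm (2*n) X (mm (2*n) (Qm n) (Pm n))" using s by (simp add: QP Id_left mm_assoc)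
  also have "\<dots> = X" using X by (simp add: QP Id_right)
  finally show ?thesis .
qed

lemma phi1_add: "phi1 n (X + Y) = phi1 n X + phi1 n Y" by (simp add: phi1_def mm_add1 mm_add2)
lemma phi1_msc: "phi1 n (msc c X) = msc c (phi1 n X)" by (simp add: phi1_def mm_msc1 mm_msc2)

lemma tadd_app: "tadd x y k = x k + y k" by (rule ext)+ (simp add: tadd_def)
lemma tsmul_app: "tsmul c x k = msc c (x k)" by (rule ext)+ (simp add: tsmul_def msc_def)

context ctx
begin

definition "phiT x = (\<lambda>k. if k = 1 then phi1 n (x 1) else x k)"
definition "psiT y = (\<lambda>k. if k = 1 then psi1 n (y 1) else y k)"

lemma T_sup: "x \<in> Tset \<Longrightarrow> sup_ok (2*n) (x k)"
  by (auto simp: Tset_def sup_ok_def)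

lemma iso: "lie_iso (2*n) Tset (so_sl_sum n K)"
  unfolding lie_iso_def
proof (intro exI conjI ballI allI)
  show "bij_betw phiT Tset (so_sl_sum n K)"
  proof (rule bij_betw_byWitness[where f' = psiT])
    show "\<forall>x\<in>Tset. psiT (phiT x) = x"
    proof
      fix x assume x: "x \<in> Tset"
      have e: "psi1 n (phi1 n (x 1)) = x 1" using T_sup[OF x, of 1] by (rule psi_phi)
      show "psiT (phiT x) = x" unfolding psiT_def phiT_def using e by (intro ext) simp
    qed
    show "\<forall>y\<in>so_sl_sum n K. phiT (psiT y) = y"
    proof
      fix y assume y: "y \<in> so_sl_sum n K"
      have "sup_ok (2*n) (y 1)" using y unfolding so_sl_sum_def sup_ok_def by blast
      then have e: "phi1 n (psi1 n (y 1)) = y 1" by (rule phi_psi)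
      show "phiT (psiT y) = y" unfolding psiT_def phiT_def using e by (intro ext) simp
    qed
    show "phiT ` Tset \<subseteq> so_sl_sum n K"
    proof
      fix z assume "z \<in> phiT ` Tset"
      then obtain x where x: "x \<in> Tset" and z: "z = phiT x" by blast
      have sx: "\<And>k r s. x k r s \<noteq> 0 \<Longrightarrow> k \<in> {1..K} \<and> r \<in> {1..2*n} \<and> s \<in> {1..2*n}"
        using x unfolding Tset_def by blast
      have so: "so_ok n (x 1)" using x by (simp add: Tset_def)
      have "z k r s \<noteq> 0 \<longrightarrow> k \<in> {1..K} \<and> r \<in> {1..2*n} \<and> s \<in> {1..2*n}" for k r s
      proof
        assume ne: "z k r s \<noteq> 0"
        show "k \<in> {1..K} \<and> r \<in> {1..2*n} \<and> s \<in> {1..2*n}"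
        proof (cases "k = 1")
          case True
          then have "phi1 n (x 1) r s \<noteq> 0" using ne by (simp add: z phiT_def)
          then have "r \<in> {1..2*n} \<and> s \<in> {1..2*n}" using phi1_out[of r n s "x 1"] by blast
          then show ?thesis using True K1 by simp
        next
          case False
          then have "x k r s \<noteq> 0" using ne by (simp add: z phiT_def)
          then show ?thesis by (rule sx)
        qed
      qed
      moreover have "z 1 s r = - z 1 r s" for r s
      proof -
        have "z 1 = phi1 n (x 1)" by (simp add: z phiT_def)
        then show ?thesis using phi1_skew[OF so, of s r] by simp
      qed
      moreover have "\<forall>k\<in>{2..K}. (\<Sum>r\<in>{1..2*n}. z k r r) = 0"
      proof
        fix k assume k: "k \<in> {2..K}"
        then have "z k = x k" by (simp add: z phiT_def)
        then show "(\<Sum>r\<in>{1..2*n}. z k r r) = 0" using x k unfolding Tset_def by simp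
      qed
      ultimately show "z \<in> so_sl_sum n K" unfolding so_sl_sum_def by blast
    qed
    show "psiT ` so_sl_sum n K \<subseteq> Tset"
    proof
      fix z assume "z \<in> psiT ` so_sl_sum n K"
      then obtain y where y: "y \<in> so_sl_sum n K" and z: "z = psiT y" by blast
      have sy: "\<And>k r s. y k r s \<noteq> 0 \<Longrightarrow> k \<in> {1..K} \<and> r \<in> {1..2*n} \<and> s \<in> {1..2*n}"
        using y unfolding so_sl_sum_def by blast
      have sk: "\<And>r s. y 1 s r = - y 1 r s" using y unfolding so_sl_sum_def by blast
      have "z k r s \<noteq> 0 \<longrightarrow> k \<in> {1..K} \<and> r \<in> {1..2*n} \<and> s \<in> {1..2*n}" for k r s
      proof
        assume ne: "z k r s \<noteq> 0"
        show "k \<in> {1..K} \<and> r \<in> {1..2*n} \<and> s \<in> {1..2*n}"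
        proof (cases "k = 1")
          case True
          then have "psi1 n (y 1) r s \<noteq> 0" using ne by (simp add: z psiT_def)
          then have "r \<in> {1..2*n} \<and> s \<in> {1..2*n}" using psi1_out[of r n s "y 1"] by blast
          then show ?thesis using True K1 by simp
        next
          case False
          then have "y k r s \<noteq> 0" using ne by (simp add: z psiT_def)
          then show ?thesis by (rule sy)
        qed
      qed
      moreover have "so_ok n (z 1)"
      proof -
        have "z 1 = psi1 n (y 1)" by (simp add: z psiT_def)
        then show ?thesis using psi1_so[of "y 1", OF sk] by simp
      qed
      moreover have "\<forall>k\<in>{2..K}. (\<Sum>r\<in>{1..2*n}. z k r r) = 0"
      proof
        fix k assume k: "k \<in> {2..K}"
        then have "z k = y k" by (simp add: z psiT_def)
        then show "(\<Sum>r\<in>{1..2*n}. z k r r) = 0" using y k unfolding so_sl_sum_def by simp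
      qed
      ultimately show "z \<in> Tset" unfolding Tset_def by blast
    qed
  qed
next
  fix x y assume x: "x \<in> Tset" and y: "y \<in> Tset"
  show "phiT (tadd x y) = tadd (phiT x) (phiT y)"
    by (rule ext) (simp add: phiT_def tadd_app phi1_add)
  show "phiT (lie_br (2*n) x y) = lie_br (2*n) (phiT x) (phiT y)"
    by (rule ext) (simp add: phiT_def lie_br_mbr phi1_mbr T_sup[OF x] T_sup[OF y])
next
  fix x c assume x: "x \<in> Tset"
  show "phiT (tsmul c x) = tsmul c (phiT x)"
    by (rule ext) (simp add: phiT_def tsmul_app phi1_msc)
qed

end

theorem lemma5p4:
  fixes n K :: nat and a :: "nat \<Rightarrow> complex"
  assumes "n \<ge> 3" and "K \<ge> 1"
    and "\<forall>k\<in>{1..K}. a k \<noteq> 0"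
    and "\<forall>k\<in>{1..K}. \<forall>j\<in>{1..K}. k \<noteq> j \<longrightarrow> a k \<noteq> a j \<and> a k \<noteq> inverse (a j)"
    and "a 1 = -1"
    and "\<forall>k\<in>{2..K}. a k \<noteq> 1"
  shows "lie_iso (2*n) (psi_image n K a) (so_sl_sum n K)"
proof -
  interpret ctx n K a using assms by unfold_locales
  show ?thesis using iso G_eq G_eq_T by simp
qed


end
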